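(* Let $k\ne -2$ and let $g\in U(\hat{\mathfrak n}_-)$ be homogeneous of degree $n$ for the grading $\deg a_1(-i_1)\cdots a_s(-i_s)=i_1+\cdots+i_s$. Then $$\epsilon(g)\equiv(-1)^n\big(F([g.\mathbf 1])\big)^{T}\mod U(\mathfrak g)\mathfrak n_-.$$
   Context: Conventions for $\mathfrak g$ and $\hat{\mathfrak g}$: - $\mathfrak g=sl(2,\mathbb C)$ has basis $e,f,h$ with the usual relations, $\mathfrak n_-=\mathbb C f$, $\mathfrak n_+=\mathbb C e$. - $\hat{\mathfrak g}=\mathfrak g\otimes\mathbb C[t,t^{-1}]\oplus\mathbb Cc$ with $x(n)=x\otimes t^n$. - $\hat{\mathfrak n}_-=\mathfrak n_-\otimes1\oplus\mathfrak g\otimes t^{-1}\mathbb C[t^{-1}]$. - $\epsilon:U(\hat{\mathfrak n}_-)\to U(\mathfrak g)$ is the algebra homomorphism with $a(-i)\mapsto a$ for $i\ge0$. The module and the VOA: - $M(k,0)=U(\hat{\mathfrak g})\otimes_{U(\mathfrak g\otimes\mathbb C[t]\oplus\mathbb Cc)}\mathbb C$, with $\mathfrak g\otimes\mathbb C[t]$ acting trivially and $c$ acting as $k$. - $M(k,0)$ is a vertex operator algebra with vacuum $\mathbf 1=1\otimes1$. Zhu's algebra. For a VOA $V$, define on homogeneous $a$ the product $a*b=\mathrm{Res}_z\frac{(1+z)^{\mathrm{wt}\,a}}{z}Y(a,z)b$. Let $O(V)$ be the span of the elements $\mathrm{Res}_z\frac{(1+z)^{\mathrm{wt}\,a}}{z^2}Y(a,z)b$.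 Then $A(V)=V/O(V)$ is an associative algebra, and $[v]$ denotes the class of $v$. $F:A(M(k,0))\to U(\mathfrak g)$ is the algebra isomorphism given by $F[a_1(-i_1-1)\cdots a_n(-i_n-1)\mathbf 1]=(-1)^{i_1+\cdots+i_n}a_n\cdots a_1$ for $a_r\in\mathfrak g$, $i_r\in\mathbb Z_{\ge0}$. $x\mapsto x^T$ denotes the principal anti-automorphism of $U(\mathfrak g)$, i.e. the anti-automorphism with $x^T=-x$ for $x\in\mathfrak g$. *)

theory Defs
  imports Complex_Main
begin

type_synonym 'a fsum = "(complex \<times> 'a list) list"

definition coef :: "'a fsum \<Rightarrow> 'a list \<Rightarrow> complex" where
  "coef p w = sum_list (map (\<lambda>(c, v). if v = w then c else 0) p)"

definition fs_add :: "'a fsum \<Rightarrow> 'a fsum \<Rightarrow> 'a fsum" where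
  "fs_add p q = p @ q"

definition fs_smul :: "complex \<Rightarrow> 'a fsum \<Rightarrow> 'a fsum" where
  "fs_smul a p = map (\<lambda>(c, v). (a * c, v)) p"

definition fs_diff :: "'a fsum \<Rightarrow> 'a fsum \<Rightarrow> 'a fsum" where
  "fs_diff p q = fs_add p (fs_smul (-1) q)"

definition fs_mul :: "'a fsum \<Rightarrow> 'a fsum \<Rightarrow> 'a fsum" where
  "fs_mul p q = concat (map (\<lambda>(c, v). map (\<lambda>(d, w). (c * d, v @ w)) q) p)"

definition fs_gen :: "'a \<Rightarrow> 'a fsum" where
  "fs_gen x = [(1, [x])]"

definition fs_one :: "'a fsum" where
  "fs_one = [(1, [])]"

definition fs_lin :: "(complex \<times> 'a) list \<Rightarrow> 'a fsum" where
  "fs_lin xs = map (\<lambda>(c, x). (c, [x])) xs"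

inductive_set ideal_mod :: "'a fsum set \<Rightarrow> 'a fsum set \<Rightarrow> 'a fsum set"
  for T L :: "'a fsum set" where
  zero: "(\<forall>w. coef p w = 0) \<Longrightarrow> p \<in> ideal_mod T L"
| coef_eq: "q \<in> ideal_mod T L \<Longrightarrow> coef p = coef q \<Longrightarrow> p \<in> ideal_mod T L"
| add: "p \<in> ideal_mod T L \<Longrightarrow> q \<in> ideal_mod T L \<Longrightarrow> fs_add p q \<in> ideal_mod T L"
| smul: "p \<in> ideal_mod T L \<Longrightarrow> fs_smul a p \<in> ideal_mod T L"
| two_sided: "t \<in> T \<Longrightarrow> fs_mul (fs_mul l t) r \<in> ideal_mod T L"
| left: "x \<in> L \<Longrightarrow> fs_mul l x \<in> ideal_mod T L"

definition cong_mod :: "'a fsum set \<Rightarrow> 'a fsum set \<Rightarrow> 'a fsum \<Rightarrow> 'a fsum \<Rightarrow> bool" where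
  "cong_mod T L p q \<longleftrightarrow> fs_diff p q \<in> ideal_mod T L"

datatype sl2b = sE | sF | sH

fun sl2_bracket :: "sl2b \<Rightarrow> sl2b \<Rightarrow> (complex \<times> sl2b) list" where
  "sl2_bracket sE sF = [(1, sH)]"
| "sl2_bracket sF sE = [(-1, sH)]"
| "sl2_bracket sH sE = [(2, sE)]"
| "sl2_bracket sE sH = [(-2, sE)]"
| "sl2_bracket sH sF = [(-2, sF)]"
| "sl2_bracket sF sH = [(2, sF)]"
| "sl2_bracket _ _ = []"

text \<open>Normalized invariant form (x|y) = tr(xy).\<close>
fun sl2_form :: "sl2b \<Rightarrow> sl2b \<Rightarrow> complex" where
  "sl2_form sE sF = 1"
| "sl2_form sF sE = 1"
| "sl2_form sH sH = 2"
| "sl2_form _ _ = 0"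

definition Ug_rels :: "sl2b fsum set" where
  "Ug_rels = {fs_diff (fs_diff [(1, [x, y])] [(1, [y, x])]) (fs_lin (sl2_bracket x y)) | x y. True}"

definition Ug_eq :: "sl2b fsum \<Rightarrow> sl2b fsum \<Rightarrow> bool" where
  "Ug_eq p q \<longleftrightarrow> cong_mod Ug_rels {} p q"

text \<open>Congruence in U(g) modulo the left ideal U(g) n_-, n_- = C f.\<close>
definition Ug_cong_nminus :: "sl2b fsum \<Rightarrow> sl2b fsum \<Rightarrow> bool" where
  "Ug_cong_nminus p q \<longleftrightarrow> cong_mod Ug_rels {fs_gen sF} p q"

text \<open>Principal anti-automorphism x \<mapsto> x^T (x^T = -x on g).\<close>
definition ug_transpose :: "sl2b fsum \<Rightarrow> sl2b fsum" where
  "ug_transpose p = map (\<lambda>(c, w). ((-1) ^ length w * c, rev w)) p"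

datatype aff = Mode sl2b int | Cen

fun aff_base :: "aff \<Rightarrow> sl2b" where
  "aff_base (Mode a m) = a"
| "aff_base Cen = sE"

fun aff_mode :: "aff \<Rightarrow> int" where
  "aff_mode (Mode a m) = m"
| "aff_mode Cen = 0"

definition ghat_rels :: "aff fsum set" where
  "ghat_rels =
     {fs_diff (fs_diff (fs_diff [(1, [Mode a m, Mode b l])] [(1, [Mode b l, Mode a m])])
          (map (\<lambda>(c, x). (c, [Mode x (m + l)])) (sl2_bracket a b)))
        [((if m + l = 0 then of_int m * sl2_form a b else 0), [Cen])] | a b m l. True}
   \<union> {fs_diff [(1, [Cen, x])] [(1, [x, Cen])] | x. True}"

text \<open>M(k,0) = U(ghat) / (U(ghat)(g \<otimes> C[t]) + U(ghat)(c - k)).\<close>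
definition M_left :: "complex \<Rightarrow> aff fsum set" where
  "M_left k = {fs_gen (Mode a m) | a m. m \<ge> 0} \<union> {[(1, [Cen]), (- k, [])]}"

definition M_eq :: "complex \<Rightarrow> aff fsum \<Rightarrow> aff fsum \<Rightarrow> bool" where
  "M_eq k v w \<longleftrightarrow> cong_mod ghat_rels (M_left k) v w"

definition neg_word :: "aff list \<Rightarrow> bool" where
  "neg_word w \<longleftrightarrow> (\<forall>x\<in>set w. \<exists>a m. x = Mode a m \<and> m \<le> -1)"

text \<open>F on monomials: a_1(-i_1-1)...a_n(-i_n-1)1 \<mapsto> (-1)^(i_1+...+i_n) a_n...a_1, extended linearly.\<close>
definition F_mono :: "aff fsum \<Rightarrow> sl2b fsum" where
  "F_mono p = map (\<lambda>(c, w). ((-1) ^ (\<Sum>x\<leftarrow>w. nat (- aff_mode x - 1)) * c, rev (map aff_base w))) p"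

text \<open>F_of_class k v u: u represents F([v]) for the state v (represented by an element of U(ghat)
  acting on the vacuum) of M(k,0).\<close>
definition F_of_class :: "complex \<Rightarrow> aff fsum \<Rightarrow> sl2b fsum \<Rightarrow> bool" where
  "F_of_class k v u \<longleftrightarrow>
     (\<exists>p. (\<forall>(c, w)\<in>set p. neg_word w) \<and> M_eq k v p \<and> Ug_eq u (F_mono p))"

text \<open>Generator (a, i) stands for a(-i); nhat_- is spanned by f(0) and a(-i), i \<ge> 1.\<close>
definition nminus_gen :: "sl2b \<times> nat \<Rightarrow> bool" where
  "nminus_gen x \<longleftrightarrow> snd x \<ge> 1 \<or> fst x = sF"

definition ndeg :: "(sl2b \<times> nat) list \<Rightarrow> nat" where
  "ndeg w = (\<Sum>x\<leftarrow>w. snd x)"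

definition eps :: "(sl2b \<times> nat) fsum \<Rightarrow> sl2b fsum" where
  "eps g = map (\<lambda>(c, w). (c, map fst w)) g"

text \<open>Inclusion U(nhat_-) \<rightarrow> U(ghat); applied to the vacuum this gives g.1.\<close>
definition emb :: "(sl2b \<times> nat) fsum \<Rightarrow> aff fsum" where
  "emb g = map (\<lambda>(c, w). (c, map (\<lambda>(a, i). Mode a (- int i)) w)) g"

end

theory Submission
  imports Defs
begin


lemma coef_Nil[simp]: "coef [] w = 0" by (simp add: coef_def)
lemma coef_Cons[simp]: "coef ((c,v)#p) w = (if v = w then c else 0) + coef p w"
  by (simp add: coef_def)
lemma coef_append[simp]: "coef (p @ q) w = coef p w + coef q w"
  by (simp add: coef_def)
lemma coef_smul[simp]: "coef (fs_smul a p) w = a * coef p w"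
  by (induction p) (auto simp: coef_def fs_smul_def algebra_simps)
lemma coef_add[simp]: "coef (fs_add p q) w = coef p w + coef q w"
  by (simp add: fs_add_def)
lemma coef_diff[simp]: "coef (fs_diff p q) w = coef p w - coef q w"
  by (simp add: fs_diff_def)
lemma coef_concat: "coef (concat ps) w = sum_list (map (\<lambda>p. coef p w) ps)"
  by (induction ps) auto

definition lift :: "('a list \<Rightarrow> 'b fsum) \<Rightarrow> 'a fsum \<Rightarrow> 'b fsum" where
  "lift f p = concat (map (\<lambda>(c,w). fs_smul c (f w)) p)"

lemma lift_Nil[simp]: "lift f [] = []" by (simp add: lift_def)
lemma lift_Cons[simp]: "lift f ((c,w)#p) = fs_smul c (f w) @ lift f p" by (simp add: lift_def)
lemma lift_append[simp]: "lift f (p @ q) = lift f p @ lift f q" by (simp add: lift_def)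

lemma coef_lift: "coef (lift f p) u = sum_list (map (\<lambda>(c,w). c * coef (f w) u) p)"
  by (induction p) auto

lemma sum_list_coef:
  assumes "finite S" "snd ` set p \<subseteq> S"
  shows "sum_list (map (\<lambda>(c,w). c * h w) p) = (\<Sum>w\<in>S. coef p w * h w)"
  using assms(2)
proof (induction p)
  case Nil then show ?case by simp
next
  case (Cons x p)
  obtain c v where x: "x = (c,v)" by force
  have vS: "v \<in> S" using Cons.prems x by auto
  have e: "\<And>w. coef (x#p) w * h w = (if v = w then c * h w else 0) + coef p w * h w"
    by (simp add: x algebra_simps)
  have "(\<Sum>w\<in>S. coef (x#p) w * h w) = (\<Sum>w\<in>S. (if v = w then c * h w else 0)) + (\<Sum>w\<in>S. coef p w * h w)"
    unfolding e by (rule sum.distrib)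
  also have "(\<Sum>w\<in>S. (if v = w then c * h w else 0)) = c * h v"
    using vS assms(1) by (simp add: sum.delta)
  finally show ?case using Cons by (simp add: x)
qed

lemma sum_list_coef_cong:
  assumes "coef p = coef q"
  shows "sum_list (map (\<lambda>(c,w). c * h w) p) = sum_list (map (\<lambda>(c,w). c * h w) q)"
proof -
  let ?S = "snd ` set p \<union> snd ` set q"
  have "sum_list (map (\<lambda>(c,w). c * h w) p) = (\<Sum>w\<in>?S. coef p w * h w)"
    by (rule sum_list_coef) auto
  also have "\<dots> = (\<Sum>w\<in>?S. coef q w * h w)" using assms by (simp only:)
  also have "\<dots> = sum_list (map (\<lambda>(c,w). c * h w) q)"
    by (rule sum_list_coef[symmetric]) auto
  finally show ?thesis .
qed

lemma lift_coef_cong: assumes "coef p = coef q" shows "coef (lift f p) = coef (lift f q)"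
proof (rule ext)
  fix u
  from assms show "coef (lift f p) u = coef (lift f q) u" unfolding coef_lift by (rule sum_list_coef_cong)
qed

lemma lift_cong_f: "(\<And>c w. (c,w) \<in> set p \<Longrightarrow> coef (f w) = coef (g w)) \<Longrightarrow> coef (lift f p) = coef (lift g p)"
  apply (rule ext)
  apply (simp only: coef_lift)
  apply (rule arg_cong[where f=sum_list])
  apply (rule map_cong)
  by auto

lemma fs_smul_Nil[simp]: "fs_smul a [] = []" by (simp add: fs_smul_def)
lemma fs_smul_Cons[simp]: "fs_smul a ((c,w)#p) = (a*c,w) # fs_smul a p" by (simp add: fs_smul_def)
lemma fs_smul_append[simp]: "fs_smul a (p @ q) = fs_smul a p @ fs_smul a q" by (simp add: fs_smul_def)
lemma fs_smul_smul[simp]: "fs_smul a (fs_smul b p) = fs_smul (a*b) p" by (induction p) (auto simp: fs_smul_def)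
lemma fs_smul_one[simp]: "fs_smul 1 p = p" by (induction p) (auto simp: fs_smul_def)

lemma lift_smul: "coef (lift f (fs_smul a p)) = coef (fs_smul a (lift f p))"
proof (induction p)
  case Nil then show ?case by simp
next
  case (Cons x p) then show ?case by (cases x) (simp add: fun_eq_iff algebra_simps)
qed

lemma lift_lift: "coef (lift f (lift g p)) = coef (lift (\<lambda>w. lift f (g w)) p)"
proof (induction p)
  case Nil then show ?case by simp
next
  case (Cons x p)
  then show ?case by (cases x) (simp add: fun_eq_iff lift_smul[unfolded fun_eq_iff])
qed

lemma lift_single[simp]: "coef (lift f [(c,w)]) u = c * coef (f w) u" by simp

lemma lift_unit: "coef (lift (\<lambda>w. [(1,w)]) p) = coef p"
  by (rule ext, induction p) auto

definition lin :: "('a fsum \<Rightarrow> 'b fsum) \<Rightarrow> bool" where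
  "lin Q \<longleftrightarrow> (\<forall>p. coef (Q p) = coef (lift (\<lambda>w. Q [(1,w)]) p))"

lemma linD: "lin Q \<Longrightarrow> coef (Q p) = coef (lift (\<lambda>w. Q [(1,w)]) p)"
  unfolding lin_def by blast

lemma lin_cong: assumes "lin Q" "coef p = coef q" shows "coef (Q p) = coef (Q q)"
proof -
  have "coef (Q p) = coef (lift (\<lambda>w. Q [(1,w)]) p)" by (rule linD[OF assms(1)])
  also have "\<dots> = coef (lift (\<lambda>w. Q [(1,w)]) q)" by (rule lift_coef_cong[OF assms(2)])
  also have "\<dots> = coef (Q q)" by (rule linD[OF assms(1), symmetric])
  finally show ?thesis .
qed

lemma lin_eq_on:
  assumes "lin QA" "lin QB" "\<And>c w. (c,w) \<in> set p \<Longrightarrow> coef (QA [(1,w)]) = coef (QB [(1,w)])"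
  shows "coef (QA p) = coef (QB p)"
proof -
  have "coef (QA p) = coef (lift (\<lambda>w. QA [(1,w)]) p)" by (rule linD[OF assms(1)])
  also have "\<dots> = coef (lift (\<lambda>w. QB [(1,w)]) p)" by (rule lift_cong_f) (rule assms(3))
  also have "\<dots> = coef (QB p)" by (rule linD[OF assms(2), symmetric])
  finally show ?thesis .
qed

lemma lin_eq:
  assumes "lin QA" "lin QB" "\<And>w. coef (QA [(1,w)]) = coef (QB [(1,w)])"
  shows "coef (QA p) = coef (QB p)"
  using assms(1,2) by (rule lin_eq_on) (rule assms(3))

lemma lin_lift: "lin (lift f)"
  unfolding lin_def
proof
  fix p show "coef (lift f p) = coef (lift (\<lambda>w. lift f [(1, w)]) p)"
    by (rule lift_cong_f) (simp add: fun_eq_iff)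
qed

lemma lin_id: "lin (\<lambda>p. p)"
  unfolding lin_def using lift_unit by (simp add: lift_unit)

lemma lin_append: assumes "lin QA" "lin QB" shows "lin (\<lambda>p. QA p @ QB p)"
  unfolding lin_def
proof
  fix p
  show "coef (QA p @ QB p) = coef (lift (\<lambda>w. QA [(1,w)] @ QB [(1,w)]) p)"
  proof (induction p)
    case Nil
    then show ?case using linD[OF assms(1), of "[]"] linD[OF assms(2), of "[]"] by (simp add: fun_eq_iff)
  next
    case (Cons x p)
    obtain c w where x: "x = (c,w)" by force
    have e1: "coef (QA (x#p)) = (\<lambda>u. c * coef (QA [(1,w)]) u + coef (QA p) u)"
      using linD[OF assms(1), of "x#p"] linD[OF assms(1), of p] by (simp add: x fun_eq_iff)
    have e2: "coef (QB (x#p)) = (\<lambda>u. c * coef (QB [(1,w)]) u + coef (QB p) u)"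
      using linD[OF assms(2), of "x#p"] linD[OF assms(2), of p] by (simp add: x fun_eq_iff)
    show ?case using Cons e1 e2 by (simp add: x fun_eq_iff algebra_simps)
  qed
qed

lemma lin_smul: assumes "lin Q" shows "lin (\<lambda>p. fs_smul a (Q p))"
  unfolding lin_def
proof
  fix p
  have "coef (fs_smul a (Q p)) = (\<lambda>u. a * coef (lift (\<lambda>w. Q [(1,w)]) p) u)"
    using linD[OF assms, of p] by (simp add: fun_eq_iff)
  also have "\<dots> = coef (fs_smul a (lift (\<lambda>w. Q [(1,w)]) p))" by (simp add: fun_eq_iff)
  also have "\<dots> = coef (lift (\<lambda>w. fs_smul a (Q [(1,w)])) p)"
    by (induction p) (auto simp: fun_eq_iff algebra_simps)
  finally show "coef (fs_smul a (Q p)) = coef (lift (\<lambda>w. fs_smul a (Q [(1, w)])) p)" .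
qed

lemma lin_Nil: "lin (\<lambda>p. [])"
  unfolding lin_def
proof
  fix p :: "'a fsum" show "coef [] = coef (lift (\<lambda>w. [] :: 'b fsum) p)" by (induction p) auto
qed

lemma lin_lift_apply: assumes l: "lin Q" shows "coef (Q (lift g p)) = coef (lift (\<lambda>w. Q (g w)) p)"
proof -
  have "coef (Q (lift g p)) = coef (lift (\<lambda>w. Q [(1,w)]) (lift g p))" by (rule linD[OF l])
  also have "\<dots> = coef (lift (\<lambda>w. lift (\<lambda>w. Q [(1,w)]) (g w)) p)" by (rule lift_lift)
  also have "\<dots> = coef (lift (\<lambda>w. Q (g w)) p)"
    by (rule lift_cong_f) (rule linD[OF l, symmetric])
  finally show ?thesis .
qed

lemma lin_comp: assumes l1: "lin QA" and l2: "lin QB" shows "lin (\<lambda>p. QA (QB p))"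
  unfolding lin_def
proof
  fix p
  have "coef (QA (QB p)) = coef (QA (lift (\<lambda>w. QB [(1,w)]) p))"
    by (rule lin_cong[OF l1 linD[OF l2]])
  also have "\<dots> = coef (lift (\<lambda>w. QA (QB [(1,w)])) p)" by (rule lin_lift_apply[OF l1])
  finally show "coef (QA (QB p)) = coef (lift (\<lambda>w. QA (QB [(1, w)])) p)" .
qed

lemma lin_append_apply: assumes "lin Q" shows "coef (Q (p @ q)) = coef (Q p @ Q q)"
  using linD[OF assms, of "p@q"] linD[OF assms, of p] linD[OF assms, of q] by (simp add: fun_eq_iff)
lemma lin_smul_apply: assumes "lin Q" shows "coef (Q (fs_smul a p)) = coef (fs_smul a (Q p))"
  using linD[OF assms, of "fs_smul a p"] linD[OF assms, of p] lift_smul[of "\<lambda>w. Q [(1,w)]" a p]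
  by (simp add: fun_eq_iff)
lemma lin_Nil_apply: assumes "lin Q" shows "coef (Q []) = coef []"
  using linD[OF assms, of "[]"] by simp
lemma lin_zero_apply: assumes "lin Q" "coef p = coef []" shows "coef (Q p) = coef []"
  using lin_cong[OF assms] lin_Nil_apply[OF assms(1)] by simp


definition rmul :: "'a list \<Rightarrow> 'a fsum \<Rightarrow> 'a fsum" where
  "rmul v q = map (\<lambda>(d,w). (d, v@w)) q"

lemma rmul_Nil[simp]: "rmul v [] = []" by (simp add: rmul_def)
lemma rmul_Cons[simp]: "rmul v ((d,w)#q) = (d, v@w) # rmul v q" by (simp add: rmul_def)
lemma rmul_append[simp]: "rmul v (p@q) = rmul v p @ rmul v q" by (simp add: rmul_def)

lemma fs_mul_lift: "fs_mul p q = lift (\<lambda>v. rmul v q) p"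
  unfolding fs_mul_def lift_def rmul_def fs_smul_def
  by (rule arg_cong[where f=concat]) (auto simp: case_prod_beta)

lemma fs_mul_Nil[simp]: "fs_mul [] q = []" by (simp add: fs_mul_def)
lemma fs_mul_Cons[simp]: "fs_mul ((c,v)#p) q = fs_smul c (rmul v q) @ fs_mul p q"
  by (simp add: fs_mul_lift)
lemma fs_mul_append1[simp]: "fs_mul (p1 @ p2) q = fs_mul p1 q @ fs_mul p2 q"
  by (simp add: fs_mul_lift)

lemma lin_rmul: "lin (rmul v)"
  unfolding lin_def
proof
  fix q show "coef (rmul v q) = coef (lift (\<lambda>w. rmul v [(1, w)]) q)"
    by (induction q) (auto simp: fun_eq_iff)
qed

lemma lin_fs_mul: "lin (\<lambda>q. fs_mul p q)"
proof (induction p)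
  case Nil then show ?case by (simp add: lin_Nil)
next
  case (Cons x p)
  obtain c v where x: "x = (c,v)" by force
  show ?case unfolding x fs_mul_Cons
    by (rule lin_append[OF lin_smul[OF lin_rmul] Cons])
qed

lemma lin_fs_mul_r: "lin (\<lambda>p. fs_mul p q)"
  unfolding fs_mul_lift by (rule lin_lift)

lemma fs_mul_cong1: "coef p = coef p' \<Longrightarrow> coef (fs_mul p q) = coef (fs_mul p' q)"
  by (rule lin_cong[OF lin_fs_mul_r])
lemma fs_mul_cong2: "coef q = coef q' \<Longrightarrow> coef (fs_mul p q) = coef (fs_mul p q')"
  by (rule lin_cong[OF lin_fs_mul])

lemma rmul_rmul: "rmul u (rmul v q) = rmul (u@v) q" by (induction q) (auto simp: rmul_def)
lemma rmul_smul: "rmul u (fs_smul c q) = fs_smul c (rmul u q)" by (induction q) (auto simp: rmul_def)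
lemma rmul_fs_mul: "rmul u (fs_mul q r) = fs_mul (rmul u q) r"
  by (induction q) (auto simp: rmul_smul rmul_rmul)
lemma fs_mul_smul1: "fs_mul (fs_smul c q) r = fs_smul c (fs_mul q r)"
  by (induction q) (auto simp: rmul_smul)

lemma fs_mul_assoc: "fs_mul (fs_mul p q) r = fs_mul p (fs_mul q r)"
  by (induction p) (auto simp: fs_mul_smul1 rmul_fs_mul)

lemma fs_mul_smul2: "coef (fs_mul p (fs_smul c q)) = coef (fs_smul c (fs_mul p q))"
  by (rule lin_smul_apply[OF lin_fs_mul])
lemma fs_mul_append2: "coef (fs_mul p (q1 @ q2)) = coef (fs_mul p q1 @ fs_mul p q2)"
  by (rule lin_append_apply[OF lin_fs_mul])

lemma fs_mul_one1: "coef (fs_mul [(1,[])] q) = coef q"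
  by (induction q) (auto simp: fun_eq_iff)
lemma fs_mul_one2: "coef (fs_mul p [(1,[])]) = coef p"
  by (induction p) (auto simp: fun_eq_iff)

lemma fs_mul_single_single: "fs_mul [(c,v)] [(d,w)] = [(c*d, v@w)]"
  by (simp add: fs_smul_def)

section \<open>Ideals\<close>

lemma ideal_coef: "q \<in> ideal_mod T L \<Longrightarrow> coef p = coef q \<Longrightarrow> p \<in> ideal_mod T L"
  by (rule ideal_mod.coef_eq)

lemma ideal_zero: "coef p = coef [] \<Longrightarrow> p \<in> ideal_mod T L"
  by (rule ideal_mod.zero) (simp add: fun_eq_iff)

lemma ideal_Nil[simp]: "[] \<in> ideal_mod T L"
  by (rule ideal_zero) simp

lemma ideal_app: "p \<in> ideal_mod T L \<Longrightarrow> q \<in> ideal_mod T L \<Longrightarrow> p @ q \<in> ideal_mod T L"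
  using ideal_mod.add[of p T L q] by (simp add: fs_add_def)

lemma ideal_smul: "p \<in> ideal_mod T L \<Longrightarrow> fs_smul a p \<in> ideal_mod T L"
  by (rule ideal_mod.smul)

lemma ideal_diff: "p \<in> ideal_mod T L \<Longrightarrow> q \<in> ideal_mod T L \<Longrightarrow> fs_diff p q \<in> ideal_mod T L"
  unfolding fs_diff_def fs_add_def by (intro ideal_app ideal_smul)

lemma ideal_lift: "(\<And>c w. (c,w) \<in> set p \<Longrightarrow> f w \<in> ideal_mod T L) \<Longrightarrow> lift f p \<in> ideal_mod T L"
proof (induction p)
  case Nil then show ?case by simp
next
  case (Cons x p) then show ?case by (cases x) (simp, intro ideal_app ideal_smul, auto)
qed

lemma ideal_concat: "(\<And>x. x \<in> set xs \<Longrightarrow> x \<in> ideal_mod T L) \<Longrightarrow> concat xs \<in> ideal_mod T L"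
  by (induction xs) (auto intro!: ideal_app)

lemma ideal_T: "t \<in> T \<Longrightarrow> t \<in> ideal_mod T L"
proof -
  assume "t \<in> T"
  then have "fs_mul (fs_mul [(1,[])] t) [(1,[])] \<in> ideal_mod T L" by (rule ideal_mod.two_sided)
  moreover have "coef t = coef (fs_mul (fs_mul [(1,[])] t) [(1,[])])"
    using fs_mul_cong1[OF fs_mul_one1, of t "[(1,[])]"] fs_mul_one2[of t] by simp
  ultimately show ?thesis by (rule ideal_coef)
qed

lemma ideal_L: "x \<in> L \<Longrightarrow> fs_mul l x \<in> ideal_mod T L"
  by (rule ideal_mod.left)

lemma ideal_left: "p \<in> ideal_mod T L \<Longrightarrow> fs_mul l p \<in> ideal_mod T L"
proof (induction p rule: ideal_mod.induct)
  case (zero p)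
  then have "coef p = coef []" by (simp add: fun_eq_iff)
  then show ?case by (intro ideal_zero) (simp add: lin_zero_apply[OF lin_fs_mul])
next
  case (coef_eq q p)
  then show ?case by (metis ideal_coef fs_mul_cong2)
next
  case (add p q)
  then show ?case using fs_mul_append2[of l p q] by (metis ideal_app ideal_coef fs_add_def)
next
  case (smul p a)
  then show ?case using fs_mul_smul2[of l a p] by (metis ideal_smul ideal_coef)
next
  case (two_sided t l' r)
  then show ?case unfolding fs_mul_assoc[symmetric] by (metis ideal_mod.two_sided fs_mul_assoc)
next
  case (left x l')
  then show ?case by (metis ideal_mod.left fs_mul_assoc)
qed

lemma ideal_right: "p \<in> ideal_mod T {} \<Longrightarrow> fs_mul p r \<in> ideal_mod T {}"
proof (induction p rule: ideal_mod.induct)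
  case (zero p)
  then have "coef p = coef []" by (simp add: fun_eq_iff)
  then show ?case by (intro ideal_zero) (simp add: lin_zero_apply[OF lin_fs_mul_r])
next
  case (coef_eq q p)
  then show ?case by (metis ideal_coef fs_mul_cong1)
next
  case (add p q)
  then show ?case by (simp add: fs_add_def ideal_app)
next
  case (smul p a)
  then show ?case by (simp add: fs_mul_smul1 ideal_smul)
next
  case (two_sided t l' r')
  then show ?case by (metis ideal_mod.two_sided fs_mul_assoc)
next
  case (left x l')
  then show ?case by simp
qed

lemma ideal_mono: "p \<in> ideal_mod T L \<Longrightarrow> T \<subseteq> T' \<Longrightarrow> L \<subseteq> L' \<Longrightarrow> p \<in> ideal_mod T' L'"
proof (induction p rule: ideal_mod.induct)
  case (zero p) then show ?case by (intro ideal_mod.zero) simp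
next
  case (coef_eq q p) then show ?case by (metis ideal_coef)
next
  case (add p q) then show ?case by (simp add: ideal_mod.add)
next
  case (smul p a) then show ?case by (simp add: ideal_mod.smul)
next
  case (two_sided t l r) then show ?case by (auto intro: ideal_mod.two_sided)
next
  case (left x l) then show ?case by (auto intro: ideal_mod.left)
qed

lemma cm_refl: "cong_mod T L p p"
  unfolding cong_mod_def by (rule ideal_zero) (simp add: fun_eq_iff)

lemma cm_coef: "coef p = coef q \<Longrightarrow> cong_mod T L p q"
  unfolding cong_mod_def by (rule ideal_zero) (simp add: fun_eq_iff)

lemma cm_sym: assumes "cong_mod T L p q" shows "cong_mod T L q p"
proof -
  have "fs_smul (-1) (fs_diff p q) \<in> ideal_mod T L" using assms unfolding cong_mod_def by (rule ideal_smul)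
  then show ?thesis unfolding cong_mod_def by (rule ideal_coef) (simp add: fun_eq_iff)
qed

lemma cm_trans: assumes "cong_mod T L p q" "cong_mod T L q r" shows "cong_mod T L p r"
proof -
  have "fs_diff p q @ fs_diff q r \<in> ideal_mod T L" using assms unfolding cong_mod_def by (rule ideal_app)
  then show ?thesis unfolding cong_mod_def by (rule ideal_coef) (simp add: fun_eq_iff)
qed

lemma cm_app: assumes "cong_mod T L p q" "cong_mod T L p' q'" shows "cong_mod T L (p @ p') (q @ q')"
proof -
  have "fs_diff p q @ fs_diff p' q' \<in> ideal_mod T L" using assms unfolding cong_mod_def by (rule ideal_app)
  then show ?thesis unfolding cong_mod_def by (rule ideal_coef) (simp add: fun_eq_iff)
qed

lemma cm_smul: assumes "cong_mod T L p q" shows "cong_mod T L (fs_smul a p) (fs_smul a q)"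
proof -
  have "fs_smul a (fs_diff p q) \<in> ideal_mod T L" using assms unfolding cong_mod_def by (rule ideal_smul)
  then show ?thesis unfolding cong_mod_def by (rule ideal_coef) (simp add: fun_eq_iff algebra_simps)
qed

lemma cm_ideal: "cong_mod T L p q \<longleftrightarrow> fs_diff p q \<in> ideal_mod T L"
  by (simp add: cong_mod_def)

lemma cm_left: assumes "cong_mod T L p q" shows "cong_mod T L (fs_mul l p) (fs_mul l q)"
proof -
  have "fs_mul l (fs_diff p q) \<in> ideal_mod T L" using assms unfolding cong_mod_def by (rule ideal_left)
  moreover have "coef (fs_diff (fs_mul l p) (fs_mul l q)) = coef (fs_mul l (fs_diff p q))"
    unfolding fs_diff_def fs_add_def
    using lin_append_apply[OF lin_fs_mul, of l p "fs_smul (-1) q"] fs_mul_smul2[of l "-1" q]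
    by (simp add: fun_eq_iff)
  ultimately show ?thesis unfolding cong_mod_def by (rule ideal_coef)
qed

lemma cm_right: assumes "cong_mod T {} p q" shows "cong_mod T {} (fs_mul p r) (fs_mul q r)"
proof -
  have "fs_mul (fs_diff p q) r \<in> ideal_mod T {}" using assms unfolding cong_mod_def by (rule ideal_right)
  then show ?thesis unfolding cong_mod_def by (rule ideal_coef) (simp add: fun_eq_iff fs_diff_def fs_add_def fs_mul_smul1)
qed

lemma cm_lift: "(\<And>c w. (c,w) \<in> set p \<Longrightarrow> cong_mod T L (f w) (g w)) \<Longrightarrow> cong_mod T L (lift f p) (lift g p)"
proof (induction p)
  case Nil then show ?case by (simp add: cm_refl)
next
  case (Cons x p) then show ?case by (cases x) (auto intro!: cm_app cm_smul)
qed

lemma cm_iff_ideal_app: "cong_mod T L p q \<longleftrightarrow> p @ fs_smul (-1) q \<in> ideal_mod T L"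
  by (simp add: cong_mod_def fs_diff_def fs_add_def)

lemma cm_coef_trans: "coef p = coef p' \<Longrightarrow> coef q = coef q' \<Longrightarrow> cong_mod T L p' q' \<Longrightarrow> cong_mod T L p q"
  by (meson cm_coef cm_sym cm_trans)


lemma UNIV_sl2b: "(UNIV :: sl2b set) = {sE, sF, sH}"
  by (auto intro: sl2b.exhaust)

instance sl2b :: finite
  by standard (simp add: UNIV_sl2b)

definition brv :: "sl2b \<Rightarrow> sl2b \<Rightarrow> sl2b \<Rightarrow> complex" where
  "brv a b z = sum_list (map (\<lambda>(c,x). if x = z then c else 0) (sl2_bracket a b))"

definition gsum :: "(sl2b \<Rightarrow> 'a fsum) \<Rightarrow> 'a fsum" where
  "gsum F = F sE @ F sF @ F sH"

lemma coef_gsum[simp]: "coef (gsum F) u = coef (F sE) u + coef (F sF) u + coef (F sH) u"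
  by (simp add: gsum_def)

lemma sum_sl2b: "(\<Sum>z\<in>UNIV. f z) = f sE + f sF + (f sH :: 'b::comm_monoid_add)"
  by (simp add: UNIV_sl2b add.assoc)

lemma gsum_lin: "(\<And>z. lin (F z)) \<Longrightarrow> lin (\<lambda>p. gsum (\<lambda>z. F z p))"
  unfolding gsum_def by (intro lin_append) auto

type_synonym vl = "sl2b \<times> nat"

fun Dw :: "complex \<Rightarrow> sl2b \<Rightarrow> nat \<Rightarrow> vl list \<Rightarrow> vl fsum" where
  "Dw k a m [] = []"
| "Dw k a m ((b,i)#w) =
     (if i < m then gsum (\<lambda>z. fs_smul (brv a b z) (Dw k z (m - i - 1) w))
      else gsum (\<lambda>z. [(brv a b z, (z, i - m) # w)]))
     @ (if m = i + 1 then [(of_nat m * sl2_form a b * k, w)] else [])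
     @ rmul [(b,i)] (Dw k a m w)"

definition Dp :: "complex \<Rightarrow> sl2b \<Rightarrow> nat \<Rightarrow> vl fsum \<Rightarrow> vl fsum" where
  "Dp k a m = lift (Dw k a m)"

definition opz :: "complex \<Rightarrow> sl2b \<Rightarrow> int \<Rightarrow> vl fsum \<Rightarrow> vl fsum" where
  "opz k z M p = (if 0 \<le> M then Dp k z (nat M) p else rmul [(z, nat (-M-1))] p)"

definition cen :: "complex \<Rightarrow> sl2b \<Rightarrow> int \<Rightarrow> sl2b \<Rightarrow> int \<Rightarrow> complex" where
  "cen k a m b l = (if m + l = 0 then of_int m * sl2_form a b * k else 0)"

text \<open>The action of [a(m), b(l)] on V.\<close>
definition Bop :: "complex \<Rightarrow> sl2b \<Rightarrow> int \<Rightarrow> sl2b \<Rightarrow> int \<Rightarrow> vl fsum \<Rightarrow> vl fsum" where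
  "Bop k a m b l p = gsum (\<lambda>z. fs_smul (brv a b z) (opz k z (m + l) p)) @ fs_smul (cen k a m b l) p"

lemma lin_Dp: "lin (Dp k a m)" unfolding Dp_def by (rule lin_lift)

lemma lin_opz: "lin (opz k z M)"
  unfolding opz_def
  by (cases "0 \<le> M") (simp_all add: lin_Dp lin_rmul)

lemma lin_Bop: "lin (Bop k a m b l)"
  unfolding Bop_def
  by (intro lin_append gsum_lin lin_smul lin_opz lin_id)

lemma Dp_single: "coef (Dp k a m [(1,w)]) = coef (Dw k a m w)"
  by (simp add: Dp_def fun_eq_iff)

lemma opz_single: "coef (opz k z M [(1,w)]) = coef (if 0 \<le> M then Dw k z (nat M) w else [(1, (z, nat(-M-1))#w)])"
  by (simp add: opz_def Dp_single)

lemma Dp_pre: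
  "coef (Dp k a m (rmul [(b,i)] p)) = coef (Bop k a (int m) b (- int i - 1) p @ rmul [(b,i)] (Dp k a m p))"
proof (rule lin_eq[where QA="\<lambda>p. Dp k a m (rmul [(b,i)] p)" and QB="\<lambda>p. Bop k a (int m) b (- int i - 1) p @ rmul [(b,i)] (Dp k a m p)"])
  show "lin (\<lambda>p. Dp k a m (rmul [(b,i)] p))" by (rule lin_comp[OF lin_Dp lin_rmul])
  show "lin (\<lambda>p. Bop k a (int m) b (- int i - 1) p @ rmul [(b,i)] (Dp k a m p))"
    by (rule lin_append[OF lin_Bop lin_comp[OF lin_rmul lin_Dp]])
  fix w
  have l: "coef (Dp k a m (rmul [(b,i)] [(1,w)])) = coef (Dw k a m ((b,i)#w))"
    by (simp add: Dp_single)
  have r2: "coef (rmul [(b,i)] (Dp k a m [(1,w)])) = coef (rmul [(b,i)] (Dw k a m w))"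
    by (rule lin_cong[OF lin_rmul Dp_single])
  have ce: "(int m + (- int i - 1) = 0) = (m = i + 1)" by auto
  have r1: "coef (Bop k a (int m) b (- int i - 1) [(1,w)]) =
     coef ((if i < m then gsum (\<lambda>z. fs_smul (brv a b z) (Dw k z (m - i - 1) w))
      else gsum (\<lambda>z. [(brv a b z, (z, i - m) # w)]))
     @ (if m = i + 1 then [(of_nat m * sl2_form a b * k, w)] else []))"
  proof (cases "i < m")
    case True
    then have "0 \<le> int m + (- int i - 1)" "nat (int m + (- int i - 1)) = m - i - 1" by auto
    then show ?thesis using True
      by (simp add: Bop_def fun_eq_iff opz_single cen_def ce)
  next
    case False
    then have "\<not> 0 \<le> int m + (- int i - 1)" "nat (- (int m + (- int i - 1)) - 1) = i - m" by auto
    then show ?thesis using False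
      by (simp add: Bop_def fun_eq_iff opz_single cen_def ce)
  qed
  show "coef (Dp k a m (rmul [(b, i)] [(1, w)])) =
        coef (Bop k a (int m) b (- int i - 1) [(1, w)] @ rmul [(b, i)] (Dp k a m [(1, w)]))"
    using l r1 r2 by (simp add: fun_eq_iff)
qed


lemma brv_simps[simp]:
  "brv sE sE z = 0" "brv sF sF z = 0" "brv sH sH z = 0"
  "brv sE sF z = (if z = sH then 1 else 0)" "brv sF sE z = (if z = sH then -1 else 0)"
  "brv sH sE z = (if z = sE then 2 else 0)" "brv sE sH z = (if z = sE then -2 else 0)"
  "brv sH sF z = (if z = sF then -2 else 0)" "brv sF sH z = (if z = sF then 2 else 0)"
  by (auto simp: brv_def)

lemma brv_anti: "brv b a z = - brv a b z"
  by (cases a; cases b; simp)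

lemma form_sym: "sl2_form b a = sl2_form a b"
  by (cases a; cases b; simp)

lemma jac1: "(\<Sum>z\<in>UNIV. brv b c z * brv a z u) - (\<Sum>z\<in>UNIV. brv a c z * brv b z u) = (\<Sum>z\<in>UNIV. brv a b z * brv z c u)"
  unfolding sum_sl2b by (cases a; cases b; cases c; cases u; simp)

lemma jac2: "(\<Sum>z\<in>UNIV. brv a b z * brv z c u) - (\<Sum>z\<in>UNIV. brv a c z * brv z b u) = (\<Sum>z\<in>UNIV. brv b c z * brv a z u)"
  unfolding sum_sl2b by (cases a; cases b; cases c; cases u; simp)

lemma inv1: "(\<Sum>z\<in>UNIV. brv b c z * sl2_form a z) = (\<Sum>z\<in>UNIV. brv a b z * sl2_form z c)"
  unfolding sum_sl2b by (cases a; cases b; cases c; simp)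

lemma inv2: "(\<Sum>z\<in>UNIV. brv a c z * sl2_form b z) = - (\<Sum>z\<in>UNIV. brv a b z * sl2_form z c)"
  unfolding sum_sl2b by (cases a; cases b; cases c; simp)


fun Vrel :: "vl \<Rightarrow> vl \<Rightarrow> vl fsum" where
  "Vrel (a,i) (b,j) = [(1,[(a,i),(b,j)])] @ [(-1,[(b,j),(a,i)])]
      @ fs_smul (-1) (gsum (\<lambda>z. [(brv a b z, [(z, i+j+1)])]))"

definition Vrels :: "vl fsum set" where "Vrels = {Vrel x y | x y. True}"

abbreviation IV where "IV \<equiv> ideal_mod Vrels {}"

lemma rmul_rmul1[simp]: "rmul [x] (rmul v q) = rmul (x#v) q" by (simp add: rmul_rmul)

lemma fs_mul_Vrel:
  "coef (fs_mul (Vrel (a,i) (b,j)) X) = coef (rmul [(a,i)] (rmul [(b,j)] X) @ fs_smul (-1) (rmul [(b,j)] (rmul [(a,i)] X))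
      @ fs_smul (-1) (gsum (\<lambda>z. fs_smul (brv a b z) (rmul [(z,i+j+1)] X))))"
  by (simp add: gsum_def fs_mul_smul1 fun_eq_iff)

lemma Vrel_in: "fs_mul (Vrel x y) X \<in> IV"
proof -
  have "Vrel x y \<in> Vrels" unfolding Vrels_def by blast
  then have "fs_mul (fs_mul [(1,[])] (Vrel x y)) X \<in> IV" by (rule ideal_mod.two_sided)
  then show ?thesis by (rule ideal_coef) (rule fs_mul_cong1[OF fs_mul_one1[symmetric]])
qed

lemma comm_pre:
  "fs_diff (opz k z M (rmul [(b,j)] X)) (rmul [(b,j)] (opz k z M X) @ Bop k z M b (- int j - 1) X) \<in> IV"
proof (cases "0 \<le> M")
  case True
  then have "coef (Dp k z (nat M) (rmul [(b,j)] X)) = coef (Bop k z M b (- int j - 1) X @ rmul [(b,j)] (Dp k z (nat M) X))"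
    using Dp_pre[of k z "nat M" b j X] by simp
  then show ?thesis using True
    by (intro ideal_zero) (simp add: opz_def fun_eq_iff)
next
  case False
  define n where "n = nat (-M-1)"
  have n1: "\<And>w. opz k w (M + (- int j - 1)) X = rmul [(w, n+j+1)] X"
    using False by (simp add: opz_def n_def) (rule arg_cong[where f="\<lambda>x. rmul [x] X"], auto)
  have nn: "nat (int j - M) = Suc (n + j)" using False by (simp add: n_def)
  have c0: "cen k z M b (- int j - 1) = 0" using False by (simp add: cen_def)
  have "coef (fs_diff (opz k z M (rmul [(b,j)] X)) (rmul [(b,j)] (opz k z M X) @ Bop k z M b (- int j - 1) X))
      = coef (fs_mul (Vrel (z,n) (b,j)) X)"
    unfolding fs_mul_Vrel using False
    by (simp add: opz_def n_def[symmetric] Bop_def nn c0 fun_eq_iff)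
  then show ?thesis by (rule ideal_coef[OF Vrel_in])
qed


lemma Dp_append[simp]: "Dp k a m (p @ q) = Dp k a m p @ Dp k a m q" by (simp add: Dp_def)
lemma coef_Dp_smul[simp]: "coef (Dp k a m (fs_smul c p)) u = c * coef (Dp k a m p) u"
  unfolding Dp_def using lift_smul[of "Dw k a m" c p] by (simp add: fun_eq_iff)
lemma Dp_Nil[simp]: "Dp k a m [] = []" by (simp add: Dp_def)
lemma rmul_gsum[simp]: "rmul v (gsum F) = gsum (\<lambda>z. rmul v (F z))" by (simp add: gsum_def)
lemma Dp_gsum[simp]: "Dp k a m (gsum F) = gsum (\<lambda>z. Dp k a m (F z))" by (simp add: gsum_def)
lemma coef_rmul_smul[simp]: "coef (rmul v (fs_smul c p)) u = c * coef (rmul v p) u"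
  by (simp add: rmul_smul)

lemma fs_mul_gsum[simp]: "fs_mul (gsum F) X = gsum (\<lambda>z. fs_mul (F z) X)" by (simp add: gsum_def)

lemma Bop_eq: "m + l = M \<Longrightarrow> Bop k a m b l P = gsum (\<lambda>z. fs_smul (brv a b z) (opz k z M P)) @ fs_smul (cen k a m b l) P"
  by (simp add: Bop_def)

lemma coef_rmul_cong: "coef P = coef Q \<Longrightarrow> coef (rmul v P) u = coef (rmul v Q) u"
  using lin_cong[OF lin_rmul] by metis

lemma C0: "Dp k a m (fs_mul (Vrel (b,i) (b',j)) r) \<in> IV"
proof -
  define x where "x = (b,i)"
  define y where "y = (b',j)"
  define n where "n = i + j + 1"
  define M1 where "M1 = int m - int i - 1"
  define M2 where "M2 = int m - int j - 1"
  define Ms where "Ms = int m - int i - int j - 2"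
  define li where "li = - int i - 1"
  define lj where "lj = - int j - 1"
  define ln where "ln = - int n - 1"
  define D where "D = Dp k a m"
  have h1: "int m + li = M1" "int m + lj = M2" "M1 + lj = Ms" "M2 + li = Ms" "int m + ln = Ms"
    by (auto simp: M1_def M2_def Ms_def li_def lj_def ln_def n_def)
  have Ms0: "Ms = 0 \<Longrightarrow> complex_of_int M1 = of_nat j + 1 \<and> complex_of_int M2 = of_nat i + 1 \<and> complex_of_nat m = of_nat i + of_nat j + 2"
  proof -
    assume "Ms = 0"
    then have "M1 = int j + 1" "M2 = int i + 1" "int m = int i + int j + 2" by (auto simp: M1_def M2_def Ms_def)
    then have "complex_of_int M1 = complex_of_int (int j + 1)" "complex_of_int M2 = complex_of_int (int i + 1)"
      "complex_of_int (int m) = complex_of_int (int i + int j + 2)" by simp_all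
    then show ?thesis by simp
  qed
  define E1 where "E1 = (\<lambda>z. fs_diff (opz k z M1 (rmul [y] r)) (rmul [y] (opz k z M1 r) @ Bop k z M1 b' lj r))"
  define E2 where "E2 = (\<lambda>z. fs_diff (opz k z M2 (rmul [x] r)) (rmul [x] (opz k z M2 r) @ Bop k z M2 b li r))"
  have E1in: "E1 z \<in> IV" for z unfolding E1_def y_def lj_def by (rule comm_pre)
  have E2in: "E2 z \<in> IV" for z unfolding E2_def x_def li_def by (rule comm_pre)
  define RHS where "RHS = gsum (\<lambda>z. fs_smul (brv a b z) (E1 z)) @ fs_smul (-1) (gsum (\<lambda>z. fs_smul (brv a b' z) (E2 z)))
     @ fs_mul (Vrel (b,i) (b',j)) (D r)"
  have RHSin: "RHS \<in> IV"
    unfolding RHS_def gsum_def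
    by (intro ideal_app ideal_smul E1in E2in Vrel_in)
  have P: "\<And>Q. coef (D (rmul [x] Q)) = coef (Bop k a (int m) b li Q @ rmul [x] (D Q))"
    unfolding D_def x_def li_def by (rule Dp_pre)
  have P': "\<And>Q. coef (D (rmul [y] Q)) = coef (Bop k a (int m) b' lj Q @ rmul [y] (D Q))"
    unfolding D_def y_def lj_def by (rule Dp_pre)
  have P'': "\<And>w Q. coef (D (rmul [(w,n)] Q)) = coef (Bop k a (int m) w ln Q @ rmul [(w,n)] (D Q))"
    unfolding D_def ln_def by (rule Dp_pre)
  have L0: "coef (D (fs_mul (Vrel (b,i) (b',j)) r)) = coef (D (rmul [x] (rmul [y] r) @ fs_smul (-1) (rmul [y] (rmul [x] r))
      @ fs_smul (-1) (gsum (\<lambda>z. fs_smul (brv b b' z) (rmul [(z,n)] r)))))"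
    unfolding D_def x_def y_def n_def by (rule lin_cong[OF lin_Dp fs_mul_Vrel])
  have Lxy: "coef (D (rmul [x] (rmul [y] r))) u = coef (Bop k a (int m) b li (rmul [y] r)) u
        + coef (rmul [x] (Bop k a (int m) b' lj r)) u + coef (rmul [x] (rmul [y] (D r))) u" for u
    using P[of "rmul [y] r"] coef_rmul_cong[OF P'[of r], of "[x]" u] by (simp add: fun_eq_iff)
  have Lyx: "coef (D (rmul [y] (rmul [x] r))) u = coef (Bop k a (int m) b' lj (rmul [x] r)) u
        + coef (rmul [y] (Bop k a (int m) b li r)) u + coef (rmul [y] (rmul [x] (D r))) u" for u
    using P'[of "rmul [x] r"] coef_rmul_cong[OF P[of r], of "[y]" u] by (simp add: fun_eq_iff)
  have Ln: "coef (D (rmul [(w,n)] r)) u = coef (Bop k a (int m) w ln r) u + coef (rmul [(w,n)] (D r)) u" for w u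
    using P''[of w r] by (simp add: fun_eq_iff)
  have key: "coef (D (fs_mul (Vrel (b,i) (b',j)) r)) u = coef RHS u" for u
  proof -
    have "coef (D (fs_mul (Vrel (b,i) (b',j)) r)) u =
       coef (D (rmul [x] (rmul [y] r))) u - coef (D (rmul [y] (rmul [x] r))) u
       - (brv b b' sE * coef (D (rmul [(sE,n)] r)) u + brv b b' sF * coef (D (rmul [(sF,n)] r)) u
          + brv b b' sH * coef (D (rmul [(sH,n)] r)) u)"
      using L0 unfolding D_def by (simp add: fun_eq_iff)
    also have "\<dots> = coef RHS u"
      unfolding Lxy Lyx Ln RHS_def E1_def E2_def
      unfolding Bop_eq[OF h1(1)] Bop_eq[OF h1(2)] Bop_eq[OF h1(3)] Bop_eq[OF h1(4)] Bop_eq[OF h1(5)]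
      unfolding x_def y_def fs_mul_Vrel[unfolded fun_eq_iff]
      apply (cases "Ms = 0")
      subgoal
        using Ms0[unfolded atomize_imp]
        apply (cases a; cases b; cases b')
        apply (simp_all add: rmul_smul cen_def h1 fs_mul_smul1 n_def)
        apply (simp_all add: algebra_simps)
        done
      subgoal
        apply (cases a; cases b; cases b')
        apply (simp_all add: rmul_smul cen_def h1 fs_mul_smul1 n_def)
        done
      done
    finally show ?thesis .
  qed
  have "coef (D (fs_mul (Vrel (b,i) (b',j)) r)) = coef RHS" by (rule ext) (rule key)
  then show ?thesis unfolding D_def by (rule ideal_coef[OF RHSin])
qed


lemma rmul_fs_mul1: "coef (rmul v P) = coef (fs_mul [(1,v)] P)"
  by (induction P) (auto simp: fun_eq_iff)

lemma rmul_ideal: "P \<in> ideal_mod T L \<Longrightarrow> rmul v P \<in> ideal_mod T L"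
  by (rule ideal_coef[OF ideal_left[of P T L "[(1,v)]"]]) (assumption, rule rmul_fs_mul1)

lemma rmul_Nil_word[simp]: "rmul [] P = P" by (induction P) auto

lemma Dp_sandwich: "t \<in> Vrels \<Longrightarrow> Dp k a m (rmul v (fs_mul t r)) \<in> IV"
proof (induction v arbitrary: a m)
  case Nil
  then obtain x y where t: "t = Vrel x y" unfolding Vrels_def by blast
  obtain b i where x: "x = (b,i)" by force
  obtain b' j where y: "y = (b',j)" by force
  show ?case unfolding t x y rmul_Nil_word by (rule C0)
next
  case (Cons y v)
  obtain b i where y: "y = (b,i)" by force
  define X where "X = rmul v (fs_mul t r)"
  obtain x1 y1 where t: "t = Vrel x1 y1" using Cons.prems unfolding Vrels_def by blast
  have X: "X \<in> IV" unfolding X_def t by (rule rmul_ideal) (rule Vrel_in)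
  have IH: "\<And>a m. Dp k a m X \<in> IV" unfolding X_def by (rule Cons.IH[OF Cons.prems])
  have opzX: "opz k z M X \<in> IV" for z M
    unfolding opz_def Dp_def[symmetric] by (cases "0 \<le> M") (auto intro: IH rmul_ideal X)
  have "Bop k a (int m) b (- int i - 1) X @ rmul [y] (Dp k a m X) \<in> IV"
    unfolding Bop_def gsum_def y
    by (intro ideal_app ideal_smul opzX X rmul_ideal IH)

  moreover have "coef (Dp k a m (rmul (y#v) (fs_mul t r))) = coef (Bop k a (int m) b (- int i - 1) X @ rmul [y] (Dp k a m X))"
    using Dp_pre[of k a m b i X] by (simp add: X_def y)
  ultimately show ?case by (rule ideal_coef)
qed

lemma Dp_IV: "p \<in> IV \<Longrightarrow> Dp k a m p \<in> IV"
proof (induction p rule: ideal_mod.induct)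
  case (zero p)
  then have "coef p = coef []" by (simp add: fun_eq_iff)
  then show ?case by (intro ideal_zero) (rule lin_zero_apply[OF lin_Dp])
next
  case (coef_eq q p)
  show ?case by (rule ideal_coef[OF coef_eq.IH]) (rule lin_cong[OF lin_Dp coef_eq.hyps(2)])
next
  case (add p q)
  then show ?case by (simp add: fs_add_def ideal_app)
next
  case (smul p c)
  show ?case by (rule ideal_coef[OF ideal_smul[OF smul.IH]]) (rule lin_smul_apply[OF lin_Dp])
next
  case (two_sided t l r)
  have e: "fs_mul (fs_mul l t) r = lift (\<lambda>v. rmul v (fs_mul t r)) l"
    by (simp only: fs_mul_assoc) (rule fs_mul_lift)
  have "coef (Dp k a m (fs_mul (fs_mul l t) r)) = coef (lift (\<lambda>v. Dp k a m (rmul v (fs_mul t r))) l)"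
    unfolding e by (rule lin_lift_apply[OF lin_Dp])
  moreover have "lift (\<lambda>v. Dp k a m (rmul v (fs_mul t r))) l \<in> IV"
    by (rule ideal_lift) (rule Dp_sandwich[OF two_sided])
  ultimately show ?case by (rule ideal_coef[rotated])
next
  case (left x l)
  then show ?case by simp
qed

lemma opz_IV: "p \<in> IV \<Longrightarrow> opz k z M p \<in> IV"
  by (simp add: opz_def Dp_IV rmul_ideal)


lemma rmul_single: "rmul [x] [(1,w)] = [(1, x#w)]" by simp

lemma Dp_zero: "coef p = coef [] \<Longrightarrow> coef (Dp k a m p) = coef []"
  by (rule lin_zero_apply[OF lin_Dp])

lemma DD_word:
  "coef (Dp k a m (Dp k b l [(1,w)])) =
   coef (Dp k b l (Dp k a m [(1,w)]) @ gsum (\<lambda>z. fs_smul (brv a b z) (Dp k z (m+l) [(1,w)])))"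
proof (induction w arbitrary: a b m l)
  case Nil
  have z: "coef (Dp k c n [(1,[])]) = coef []" for c n by (simp add: Dp_single)
  show ?case
    using Dp_zero[OF z[of b l], where a=a and m=m] Dp_zero[OF z[of a m], where a=b and m=l] z
    by (simp add: fun_eq_iff)
next
  case (Cons x w)
  obtain c i where x: "x = (c,i)" by force
  define W where "W = [(1::complex, w)]"
  have xW: "[(1, x#w)] = rmul [(c,i)] W" by (simp add: W_def x)
  define li where "li = - int i - 1"
  define Ma where "Ma = int m + li"
  define Mb where "Mb = int l + li"
  define Mt where "Mt = int m + int l + li"
  have h: "int m + li = Ma" "int l + li = Mb" "int m + Mb = Mt" "int l + Ma = Mt" "int (m+l) + li = Mt"
    by (auto simp: Ma_def Mb_def Mt_def)
  have K: "coef (Dp k a' m' (opz k z M W)) = coef (opz k z M (Dp k a' m' W) @ Bop k a' (int m') z M W)"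
    for a' m' z M
  proof (cases "0 \<le> M")
    case True
    have e1: "int m' + M = int m' + M" by simp
    have e2: "nat (int m' + M) = m' + nat M" using True by simp
    have c0: "cen k a' (int m') z M = (if int m' + M = 0 then 0 else 0)"
      using True by (auto simp: cen_def)
    show ?thesis
      using Cons.IH[where a=a' and b=z and m=m' and l="nat M"] True
      unfolding W_def by (simp add: opz_def Bop_eq[OF e1] c0 fun_eq_iff e2)
  next
    case False
    define n' where "n' = nat (-M-1)"
    have e: "- int n' - 1 = M" using False by (simp add: n'_def)
    show ?thesis using False Dp_pre[of k a' m' z n' W] unfolding e
      by (simp add: opz_def n'_def fun_eq_iff)
  qed
  have P: "\<And>a' m' Q. coef (Dp k a' m' (rmul [(c,i)] Q)) = coef (Bop k a' (int m') c li Q @ rmul [(c,i)] (Dp k a' m' Q))"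
    unfolding li_def by (rule Dp_pre)
  have E1: "coef (Dp k a m (Dp k b l (rmul [(c,i)] W))) u =
      coef (Dp k a m (Bop k b (int l) c li W)) u + coef (Bop k a (int m) c li (Dp k b l W)) u
      + coef (rmul [(c,i)] (Dp k b l (Dp k a m W))) u
      + coef (rmul [(c,i)] (gsum (\<lambda>z. fs_smul (brv a b z) (Dp k z (m+l) W)))) u" for u
  proof -
    have "coef (Dp k a m (Dp k b l (rmul [(c,i)] W))) = coef (Dp k a m (Bop k b (int l) c li W @ rmul [(c,i)] (Dp k b l W)))"
      by (rule lin_cong[OF lin_Dp P])
    moreover have "coef (rmul [(c,i)] (Dp k a m (Dp k b l W))) =
       coef (rmul [(c,i)] (Dp k b l (Dp k a m W) @ gsum (\<lambda>z. fs_smul (brv a b z) (Dp k z (m+l) W))))"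
      unfolding W_def by (rule lin_cong[OF lin_rmul Cons.IH])
    ultimately show ?thesis using P[of a m "Dp k b l W"] by (simp add: fun_eq_iff)
  qed
  have E2: "coef (Dp k b l (Dp k a m (rmul [(c,i)] W))) u =
      coef (Dp k b l (Bop k a (int m) c li W)) u + coef (Bop k b (int l) c li (Dp k a m W)) u
      + coef (rmul [(c,i)] (Dp k b l (Dp k a m W))) u" for u
  proof -
    have "coef (Dp k b l (Dp k a m (rmul [(c,i)] W))) = coef (Dp k b l (Bop k a (int m) c li W @ rmul [(c,i)] (Dp k a m W)))"
      by (rule lin_cong[OF lin_Dp P])
    then show ?thesis using P[of b l "Dp k a m W"] by (simp add: fun_eq_iff)
  qed
  have E3: "coef (Dp k z (m+l) (rmul [(c,i)] W)) u = coef (Bop k z (int (m+l)) c li W) u + coef (rmul [(c,i)] (Dp k z (m+l) W)) u" for z u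
    using P[of z "m+l" W] by (simp add: fun_eq_iff)
  have E4: "coef (Dp k a' m' (Bop k b' (int l') c li W)) u =
     brv b' c sE * coef (Dp k a' m' (opz k sE (int l' + li) W)) u + brv b' c sF * coef (Dp k a' m' (opz k sF (int l' + li) W)) u
     + brv b' c sH * coef (Dp k a' m' (opz k sH (int l' + li) W)) u + cen k b' (int l') c li * coef (Dp k a' m' W) u" for a' m' b' l' u
    by (simp add: Bop_def)
  have K': "coef (Dp k a' m' (opz k z M W)) u = coef (opz k z M (Dp k a' m' W)) u + coef (Bop k a' (int m') z M W) u" for a' m' z M u
    using K[of a' m' z M] by (simp add: fun_eq_iff)
  have cA: "cen k a' (int m) z Mb = (if Mt = 0 then of_nat m * sl2_form a' z * k else 0)" for a' z
    by (simp add: cen_def h)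
  have cB: "cen k a' (int l) z Ma = (if Mt = 0 then of_nat l * sl2_form a' z * k else 0)" for a' z
    by (simp add: cen_def h)
  have cC: "cen k a' (int (m+l)) z li = (if Mt = 0 then (of_nat m + of_nat l) * sl2_form a' z * k else 0)" for a' z
    by (simp add: cen_def Mt_def)
  show ?case
  proof (rule ext)
    fix u
    show "coef (Dp k a m (Dp k b l [(1, x # w)])) u =
          coef (Dp k b l (Dp k a m [(1, x # w)]) @ gsum (\<lambda>z. fs_smul (brv a b z) (Dp k z (m + l) [(1, x # w)]))) u"
      unfolding xW
      apply (simp only: coef_append coef_gsum coef_smul E1 E2 E3 E4 K' h)
      unfolding Bop_eq[OF h(1)] Bop_eq[OF h(2)] Bop_eq[OF h(3)] Bop_eq[OF h(4)] Bop_eq[OF h(5)]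
      apply (simp only: cA cB cC)
      apply (cases "Mt = 0")
       apply (cases a; cases b; cases c; simp add: rmul_smul algebra_simps)
      apply (cases a; cases b; cases c; simp add: rmul_smul algebra_simps)
      done
  qed
qed


lemma DD:
  "coef (Dp k a m (Dp k b l p)) = coef (Dp k b l (Dp k a m p) @ gsum (\<lambda>z. fs_smul (brv a b z) (Dp k z (m+l) p)))"
proof (rule lin_eq[where QA="\<lambda>p. Dp k a m (Dp k b l p)" and QB="\<lambda>p. Dp k b l (Dp k a m p) @ gsum (\<lambda>z. fs_smul (brv a b z) (Dp k z (m+l) p))"])
  show "lin (\<lambda>p. Dp k a m (Dp k b l p))" by (rule lin_comp[OF lin_Dp lin_Dp])
  have g: "lin (\<lambda>p. gsum (\<lambda>z. fs_smul (brv a b z) (Dp k z (m+l) p)))"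
    by (rule gsum_lin[where F="\<lambda>z p. fs_smul (brv a b z) (Dp k z (m+l) p)"]) (rule lin_smul[OF lin_Dp])
  show "lin (\<lambda>p. Dp k b l (Dp k a m p) @ gsum (\<lambda>z. fs_smul (brv a b z) (Dp k z (m+l) p)))"
    by (rule lin_append[OF lin_comp[OF lin_Dp lin_Dp] g])
  fix w show "coef (Dp k a m (Dp k b l [(1,w)])) =
    coef (Dp k b l (Dp k a m [(1,w)]) @ gsum (\<lambda>z. fs_smul (brv a b z) (Dp k z (m+l) [(1,w)])))"
    by (rule DD_word)
qed

fun actl :: "complex \<Rightarrow> aff \<Rightarrow> vl fsum \<Rightarrow> vl fsum" where
  "actl k (Mode a m) p = opz k a m p"
| "actl k Cen p = fs_smul k p"

definition actw :: "complex \<Rightarrow> aff list \<Rightarrow> vl fsum \<Rightarrow> vl fsum" where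
  "actw k w p = foldr (actl k) w p"

lemma actw_Nil[simp]: "actw k [] p = p" by (simp add: actw_def)
lemma actw_Cons[simp]: "actw k (x#w) p = actl k x (actw k w p)" by (simp add: actw_def)
lemma actw_append: "actw k (u@w) p = actw k u (actw k w p)" by (simp add: actw_def)

definition rho :: "complex \<Rightarrow> aff fsum \<Rightarrow> vl fsum \<Rightarrow> vl fsum" where
  "rho k P v = lift (\<lambda>w. actw k w v) P"

lemma lin_actl: "lin (actl k x)"
proof (cases x)
  case (Mode a m)
  have "actl k (Mode a m) = opz k a m" by (rule ext) simp
  then show ?thesis by (simp add: Mode lin_opz)
next
  case Cen
  have "actl k Cen = (\<lambda>p. fs_smul k p)" by (rule ext) simp
  then show ?thesis by (simp add: Cen lin_smul[OF lin_id])
qed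

lemma lin_actw: "lin (actw k w)"
proof (induction w)
  case Nil then show ?case by (simp add: lin_id)
next
  case (Cons x w)
  have "lin (\<lambda>p. actl k x (actw k w p))" by (rule lin_comp[OF lin_actl Cons])
  then show ?case by simp
qed

lemma lin_rho: "lin (rho k P)"
proof (induction P)
  case Nil then show ?case by (simp add: rho_def lin_Nil)
next
  case (Cons x P)
  obtain c w where x: "x = (c,w)" by force
  have "lin (\<lambda>v. fs_smul c (actw k w v) @ rho k P v)"
    by (rule lin_append[OF lin_smul[OF lin_actw] Cons])
  then show ?case by (simp add: rho_def x)
qed

lemma rho_coef_cong: "coef P = coef Q \<Longrightarrow> coef (rho k P v) = coef (rho k Q v)"
  unfolding rho_def by (rule lift_coef_cong)

lemma lift_rmul: "lift g (rmul u Q) = lift (\<lambda>w. g (u@w)) Q"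
  by (induction Q) auto

lemma rho_mul: "coef (rho k (fs_mul P Q) v) = coef (rho k P (rho k Q v))"
proof -
  have "coef (rho k (fs_mul P Q) v) = coef (lift (\<lambda>w. actw k w v) (lift (\<lambda>u. rmul u Q) P))"
    by (simp add: rho_def fs_mul_lift)
  also have "\<dots> = coef (lift (\<lambda>u. lift (\<lambda>w. actw k w v) (rmul u Q)) P)" by (rule lift_lift)
  also have "\<dots> = coef (lift (\<lambda>u. actw k u (rho k Q v)) P)"
  proof (rule lift_cong_f)
    fix c u
    have "coef (lift (\<lambda>w. actw k w v) (rmul u Q)) = coef (lift (\<lambda>w. actw k u (actw k w v)) Q)"
      by (simp add: lift_rmul actw_append)
    also have "\<dots> = coef (actw k u (lift (\<lambda>w. actw k w v) Q))"
      by (rule lin_lift_apply[OF lin_actw, symmetric])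
    finally show "coef (lift (\<lambda>w. actw k w v) (rmul u Q)) = coef (actw k u (rho k Q v))"
      by (simp add: rho_def)
  qed
  also have "\<dots> = coef (rho k P (rho k Q v))" by (simp add: rho_def)
  finally show ?thesis .
qed

lemma actl_IV: "p \<in> IV \<Longrightarrow> actl k x p \<in> IV"
  by (cases x) (simp_all add: opz_IV ideal_smul)

lemma actw_IV: "p \<in> IV \<Longrightarrow> actw k w p \<in> IV"
  by (induction w) (simp_all add: actl_IV)

lemma rho_IV: "v \<in> IV \<Longrightarrow> rho k P v \<in> IV"
  unfolding rho_def by (rule ideal_lift) (rule actw_IV)

lemma bracket_gsum: "coef (map (\<lambda>(c,x). (c, h x)) (sl2_bracket a b)) = coef (gsum (\<lambda>z. [(brv a b z, h z)]))"
  by (cases a; cases b) (simp_all add: fun_eq_iff)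

lemma Bop_anti: "coef (Bop k b l a m v) = coef (fs_smul (-1) (Bop k a m b l v))"
proof -
  have c: "cen k b l a m = - cen k a m b l"
  proof (cases "m + l = 0")
    case True
    then have "l = - m" by simp
    then show ?thesis by (simp add: cen_def form_sym)
  qed (auto simp: cen_def)
  have mm: "l + m = m + l" by simp
  show ?thesis by (simp add: Bop_def fun_eq_iff brv_anti[of b a] c mm)
qed

lemma coef_lift_smul[simp]: "coef (lift f (fs_smul a p)) u = a * coef (lift f p) u"
  using lift_smul[of f a p] by (simp add: fun_eq_iff)

lemma rho_fs_diff: "coef (rho k (fs_diff P Q) v) = coef (rho k P v @ fs_smul (-1) (rho k Q v))"
  by (simp add: rho_def fs_diff_def fs_add_def fun_eq_iff)

lemma rho_single: "rho k [(c,w)] v = fs_smul c (actw k w v)" by (simp add: rho_def)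

lemma rho_relA:
  "rho k (fs_diff (fs_diff (fs_diff [(1,[Mode a m, Mode b l])] [(1,[Mode b l, Mode a m])])
          (map (\<lambda>(c, x). (c, [Mode x (m + l)])) (sl2_bracket a b)))
        [((if m + l = 0 then of_int m * sl2_form a b else 0), [Cen])]) v \<in> IV"
proof -
  define R where "R = opz k a m (opz k b l v) @ fs_smul (-1) (opz k b l (opz k a m v)) @ fs_smul (-1) (Bop k a m b l v)"
  have br: "coef (rho k (map (\<lambda>(c, x). (c, [Mode x (m + l)])) (sl2_bracket a b)) v) =
      coef (gsum (\<lambda>z. fs_smul (brv a b z) (opz k z (m+l) v)))"
    using rho_coef_cong[OF bracket_gsum[of "\<lambda>x. [Mode x (m+l)]" a b], of k v]
    by (simp add: rho_def gsum_def)
  have eq: "coef (rho k (fs_diff (fs_diff (fs_diff [(1,[Mode a m, Mode b l])] [(1,[Mode b l, Mode a m])])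
          (map (\<lambda>(c, x). (c, [Mode x (m + l)])) (sl2_bracket a b)))
        [((if m + l = 0 then of_int m * sl2_form a b else 0), [Cen])]) v) = coef R"
    using br by (simp add: rho_fs_diff[unfolded fun_eq_iff] rho_single R_def Bop_def cen_def fun_eq_iff algebra_simps)
  have "R \<in> IV"
  proof (cases "0 \<le> m")
    case m: True
    show ?thesis
    proof (cases "0 \<le> l")
      case l: True
      have e: "nat (m + l) = nat m + nat l" using m l by simp
      have c: "cen k a m b l = 0" using m l by (auto simp: cen_def)
      show ?thesis
        using DD[of k a "nat m" b "nat l" v] m l
        by (intro ideal_zero) (simp add: R_def opz_def Bop_def e c fun_eq_iff)
    next
      case l: False
      define j where "j = nat (-l-1)"
      have e: "- int j - 1 = l" using l by (simp add: j_def)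
      show ?thesis
        using Dp_pre[of k a "nat m" b j v] m l unfolding e
        by (intro ideal_zero) (simp add: R_def opz_def j_def fun_eq_iff)
    qed
  next
    case m: False
    define i where "i = nat (-m-1)"
    have ei: "- int i - 1 = m" using m by (simp add: i_def)
    show ?thesis
    proof (cases "0 \<le> l")
      case l: True
      have "coef (Dp k b (nat l) (rmul [(a,i)] v)) = coef (Bop k b l a m v @ rmul [(a,i)] (Dp k b (nat l) v))"
        using Dp_pre[of k b "nat l" a i v] l unfolding ei by simp
      then show ?thesis
        using Bop_anti[of k b l a m v] m l
        by (intro ideal_zero) (simp add: R_def opz_def i_def[symmetric] fun_eq_iff)
    next
      case l: False
      define j where "j = nat (-l-1)"
      have ej: "nat (- m - l - 1) = Suc (i + j)" using m l by (simp add: i_def j_def)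
      have c: "cen k a m b l = 0" using m l by (auto simp: cen_def)
      have "coef R = coef (fs_mul (Vrel (a,i) (b,j)) v)"
        unfolding fs_mul_Vrel using m l
        by (simp add: R_def opz_def i_def[symmetric] j_def[symmetric] Bop_def ej c fun_eq_iff)
      then show ?thesis by (rule ideal_coef[OF Vrel_in])
    qed
  qed
  then show ?thesis using eq by (rule ideal_coef)
qed

lemma rho_rel: "t \<in> ghat_rels \<Longrightarrow> rho k t v \<in> IV"
proof (unfold ghat_rels_def, elim UnE CollectE exE conjE)
  fix a b m l assume t: "t = fs_diff (fs_diff (fs_diff [(1, [Mode a m, Mode b l])] [(1, [Mode b l, Mode a m])])
          (map (\<lambda>(c, x). (c, [Mode x (m + l)])) (sl2_bracket a b)))
         [(if m + l = 0 then of_int m * sl2_form a b else 0, [Cen])]"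
  show "rho k t v \<in> IV" unfolding t by (rule rho_relA)
next
  fix x assume t: "t = fs_diff [(1, [Cen, x])] [(1, [x, Cen])]"
  have "coef (rho k t v) = coef []"
    using lin_smul_apply[OF lin_actl, of k x k v]
    by (simp add: t rho_fs_diff[unfolded fun_eq_iff] rho_single fun_eq_iff)
  then show "rho k t v \<in> IV" by (rule ideal_zero)
qed


lemma rho_Nil_P[simp]: "rho k [] v = []" by (simp add: rho_def)

lemma rho_zero: "coef P = coef [] \<Longrightarrow> coef (rho k P v) = coef []"
  using rho_coef_cong[of P "[]" k v] by simp

lemma rho_M: "P \<in> ideal_mod ghat_rels (M_left k) \<Longrightarrow> rho k P [(1,[])] \<in> IV"
proof (induction P rule: ideal_mod.induct)
  case (zero p)
  then have "coef p = coef []" by (simp add: fun_eq_iff)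
  then show ?case by (intro ideal_zero) (rule rho_zero)
next
  case (coef_eq q p)
  show ?case by (rule ideal_coef[OF coef_eq.IH]) (rule rho_coef_cong[OF coef_eq.hyps(2)])
next
  case (add p q)
  then show ?case by (simp add: fs_add_def rho_def ideal_app)
next
  case (smul p a)
  have "coef (rho k (fs_smul a p) [(1,[])]) = coef (fs_smul a (rho k p [(1,[])]))"
    by (simp add: rho_def fun_eq_iff)
  then show ?case by (rule ideal_coef[OF ideal_smul[OF smul.IH]])
next
  case (two_sided t l r)
  have e: "coef (rho k (fs_mul (fs_mul l t) r) [(1,[])]) = coef (rho k l (rho k t (rho k r [(1,[])])))"
  proof -
    have "coef (rho k (fs_mul (fs_mul l t) r) [(1,[])]) = coef (rho k (fs_mul l t) (rho k r [(1,[])]))"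
      by (rule rho_mul)
    also have "\<dots> = coef (rho k l (rho k t (rho k r [(1,[])])))" by (rule rho_mul)
    finally show ?thesis .
  qed
  have "rho k l (rho k t (rho k r [(1,[])])) \<in> IV"
    by (rule rho_IV) (rule rho_rel[OF two_sided])
  then show ?case using e by (rule ideal_coef)
next
  case (left x l)
  have z: "coef (rho k x [(1,[])]) = coef []"
    using left unfolding M_left_def
  proof (elim UnE CollectE exE conjE)
    fix a m assume x: "x = fs_gen (Mode a m)" and m: "0 \<le> m"
    show ?thesis using m by (simp add: x fs_gen_def rho_def opz_def Dp_single fun_eq_iff)
  next
    assume "x \<in> {[(1, [Cen]), (- k, [])]}"
    then show ?thesis by (simp add: rho_def fun_eq_iff)
  qed
  have "coef (rho k (fs_mul l x) [(1,[])]) = coef (rho k l (rho k x [(1,[])]))" by (rule rho_mul)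
  also have "\<dots> = coef []" by (rule lin_zero_apply[OF lin_rho z])
  finally show ?case by (rule ideal_zero)
qed

definition sgnw :: "vl list \<Rightarrow> complex" where
  "sgnw w = (-1) ^ (length w + sum_list (map snd w))"

lemma sgnw_append: "sgnw (v @ w) = sgnw v * sgnw w"
  by (simp add: sgnw_def power_add algebra_simps)

lemma sgnw_Cons: "sgnw ((b,i)#w) = (-1)^(Suc i) * sgnw w"
  by (simp add: sgnw_def power_add algebra_simps)

definition lam :: "vl fsum \<Rightarrow> sl2b fsum" where
  "lam p = lift (\<lambda>w. [(sgnw w, map fst w)]) p"

lemma lin_lam: "lin lam" unfolding lam_def[abs_def] by (rule lin_lift)

lemma lam_append[simp]: "lam (p @ q) = lam p @ lam q" by (simp add: lam_def)
lemma lam_single: "lam [(c,w)] = [(c * sgnw w, map fst w)]" by (simp add: lam_def)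
lemma coef_lam_smul[simp]: "coef (lam (fs_smul a p)) u = a * coef (lam p) u"
  by (simp add: lam_def)
lemma lam_Nil[simp]: "lam [] = []" by (simp add: lam_def)

lemma lam_rmul: "coef (lam (rmul v q)) = coef (fs_smul (sgnw v) (rmul (map fst v) (lam q)))"
proof -
  have "lam (rmul v q) = lift (\<lambda>w. [(sgnw (v@w), map fst (v@w))]) q"
    by (simp add: lam_def lift_rmul)
  also have "coef \<dots> = coef (lift (\<lambda>w. fs_smul (sgnw v) (rmul (map fst v) [(sgnw w, map fst w)])) q)"
    by (rule lift_cong_f) (simp add: sgnw_append fun_eq_iff)
  also have "\<dots> = coef (fs_smul (sgnw v) (rmul (map fst v) (lam q)))"
    unfolding lam_def
    by (rule lin_lift_apply[OF lin_smul[OF lin_rmul], symmetric])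
  finally show ?thesis .
qed

lemma lam_mul: "coef (lam (fs_mul p q)) = coef (fs_mul (lam p) (lam q))"
proof -
  have "coef (lam (fs_mul p q)) = coef (lift (\<lambda>v. lam (rmul v q)) p)"
    unfolding fs_mul_lift by (rule lin_lift_apply[OF lin_lam])
  also have "\<dots> = coef (lift (\<lambda>v. fs_smul (sgnw v) (rmul (map fst v) (lam q))) p)"
    by (rule lift_cong_f) (rule lam_rmul)
  also have "\<dots> = coef (lift (\<lambda>v. lift (\<lambda>v'. rmul v' (lam q)) [(sgnw v, map fst v)]) p)"
    by (rule lift_cong_f) (simp add: fun_eq_iff)
  also have "\<dots> = coef (lift (\<lambda>v'. rmul v' (lam q)) (lam p))"
    unfolding lam_def by (rule lift_lift[symmetric])
  also have "\<dots> = coef (fs_mul (lam p) (lam q))" by (simp add: fs_mul_lift)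
  finally show ?thesis .
qed

definition Urel :: "sl2b \<Rightarrow> sl2b \<Rightarrow> sl2b fsum" where
  "Urel a b = fs_diff (fs_diff [(1, [a, b])] [(1, [b, a])]) (fs_lin (sl2_bracket a b))"

lemma Urel_in: "Urel a b \<in> Ug_rels" unfolding Ug_rels_def Urel_def by blast

lemma fs_lin_gsum: "coef (fs_lin (sl2_bracket a b)) = coef (gsum (\<lambda>z. [(brv a b z, [z])]))"
  by (cases a; cases b) (simp_all add: fs_lin_def fun_eq_iff)

lemma lam_Vrel: "coef (lam (Vrel (a,i) (b,j))) = coef (fs_smul ((-1)^(i+j)) (Urel a b))"
proof -
  have s2: "sgnw [(a,i),(b,j)] = (-1)^(i+j)" "sgnw [(b,j),(a,i)] = (-1)^(i+j)"
    "\<And>z. sgnw [(z, Suc (i+j))] = (-1)^(i+j)"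
    by (simp_all add: sgnw_def power_add algebra_simps)
  show ?thesis
    by (simp add: Urel_def lam_def gsum_def s2 fun_eq_iff algebra_simps fs_lin_gsum[unfolded fun_eq_iff])
qed

abbreviation IU where "IU \<equiv> ideal_mod Ug_rels {}"

lemma lam_IV: "p \<in> IV \<Longrightarrow> lam p \<in> IU"
proof (induction p rule: ideal_mod.induct)
  case (zero p)
  then have "coef p = coef []" by (simp add: fun_eq_iff)
  then show ?case by (intro ideal_zero) (rule lin_zero_apply[OF lin_lam])
next
  case (coef_eq q p)
  show ?case by (rule ideal_coef[OF coef_eq.IH]) (rule lin_cong[OF lin_lam coef_eq.hyps(2)])
next
  case (add p q)
  then show ?case by (simp add: fs_add_def ideal_app)
next
  case (smul p a)
  show ?case by (rule ideal_coef[OF ideal_smul[OF smul.IH, of a]]) (simp add: fun_eq_iff)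
next
  case (two_sided t l r)
  obtain x y where t: "t = Vrel x y" using two_sided unfolding Vrels_def by blast
  obtain a i where x: "x = (a,i)" by force
  obtain b j where y: "y = (b,j)" by force
  define s :: complex where "s = (-1)^(i+j)"
  have "fs_smul s (fs_mul (fs_mul (lam l) (Urel a b)) (lam r)) \<in> IU"
    by (intro ideal_smul ideal_mod.two_sided Urel_in)
  moreover have "coef (lam (fs_mul (fs_mul l t) r)) = coef (fs_smul s (fs_mul (fs_mul (lam l) (Urel a b)) (lam r)))"
  proof -
    have "coef (lam (fs_mul (fs_mul l t) r)) = coef (fs_mul (lam (fs_mul l t)) (lam r))" by (rule lam_mul)
    also have "\<dots> = coef (fs_mul (fs_mul (lam l) (lam t)) (lam r))" by (rule fs_mul_cong1[OF lam_mul])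
    also have "\<dots> = coef (fs_mul (fs_mul (lam l) (fs_smul s (Urel a b))) (lam r))"
      unfolding t x y s_def by (rule fs_mul_cong1[OF fs_mul_cong2[OF lam_Vrel]])
    also have "\<dots> = coef (fs_mul (fs_smul s (fs_mul (lam l) (Urel a b))) (lam r))"
      by (rule fs_mul_cong1[OF fs_mul_smul2])
    also have "\<dots> = coef (fs_smul s (fs_mul (fs_mul (lam l) (Urel a b)) (lam r)))"
      by (simp add: fs_mul_smul1)
    finally show ?thesis .
  qed
  ultimately show ?case by (rule ideal_coef)
next
  case (left x l)
  then show ?case by simp
qed


section \<open>Transpose\<close>

lemma tr_append[simp]: "ug_transpose (p @ q) = ug_transpose p @ ug_transpose q"
  by (simp add: ug_transpose_def)
lemma tr_Nil[simp]: "ug_transpose [] = []" by (simp add: ug_transpose_def)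
lemma tr_Cons[simp]: "ug_transpose ((c,w)#p) = ((-1)^length w * c, rev w) # ug_transpose p"
  by (simp add: ug_transpose_def)
lemma coef_tr_smul[simp]: "coef (ug_transpose (fs_smul a p)) u = a * coef (ug_transpose p) u"
  by (induction p) (auto simp: algebra_simps)

lemma tr_lift: "coef (ug_transpose p) = coef (lift (\<lambda>w. [((-1)^length w, rev w)]) p)"
  by (induction p) (auto simp: fun_eq_iff)

lemma lin_tr: "lin ug_transpose"
  unfolding lin_def
proof
  fix p :: "sl2b fsum"
  show "coef (ug_transpose p) = coef (lift (\<lambda>w. ug_transpose [(1, w)]) p)"
    using tr_lift[of p] by (simp add: fun_eq_iff lift_cong_f)
qed

lemma tr_rmul: "coef (ug_transpose (rmul v q)) = coef (fs_mul (ug_transpose q) [((-1)^length v, rev v)])"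
  by (induction q) (auto simp: fun_eq_iff power_add algebra_simps)

lemma tr_mul: "coef (ug_transpose (fs_mul p q)) = coef (fs_mul (ug_transpose q) (ug_transpose p))"
proof (induction p)
  case Nil then show ?case by (simp add: lin_Nil_apply[OF lin_fs_mul])
next
  case (Cons x p)
  obtain c v where x: "x = (c,v)" by force
  have "coef (fs_mul (ug_transpose q) (ug_transpose (x#p))) =
        coef (fs_mul (ug_transpose q) [((-1)^length v * c, rev v)] @ fs_mul (ug_transpose q) (ug_transpose p))"
    using lin_append_apply[OF lin_fs_mul, of "ug_transpose q" "[((-1)^length v * c, rev v)]" "ug_transpose p"]
    by (simp add: x)
  moreover have "coef (fs_mul (ug_transpose q) [((-1)^length v * c, rev v)]) =
      coef (fs_smul c (fs_mul (ug_transpose q) [((-1)^length v, rev v)]))"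
    using lin_smul_apply[OF lin_fs_mul, of "ug_transpose q" c "[((-1)^length v, rev v)]"]
    by (simp add: algebra_simps)
  ultimately show ?case using Cons tr_rmul[of v q] by (simp add: x fun_eq_iff)
qed

lemma tr_IU: "p \<in> IU \<Longrightarrow> ug_transpose p \<in> IU"
proof (induction p rule: ideal_mod.induct)
  case (zero p)
  then have "coef p = coef []" by (simp add: fun_eq_iff)
  then show ?case by (intro ideal_zero) (rule lin_zero_apply[OF lin_tr])
next
  case (coef_eq q p)
  show ?case by (rule ideal_coef[OF coef_eq.IH]) (rule lin_cong[OF lin_tr coef_eq.hyps(2)])
next
  case (add p q)
  then show ?case by (simp add: fs_add_def ideal_app)
next
  case (smul p a)
  show ?case by (rule ideal_coef[OF ideal_smul[OF smul.IH, of a]]) (simp add: fun_eq_iff)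
next
  case (two_sided t l r)
  obtain x y where t: "t = fs_diff (fs_diff [(1, [x, y])] [(1, [y, x])]) (fs_lin (sl2_bracket x y))"
    using two_sided unfolding Ug_rels_def by blast
  have tt: "coef (ug_transpose t) = coef (fs_smul (-1) t)"
    unfolding t by (cases x; cases y) (simp_all add: fs_diff_def fs_add_def fs_lin_def fun_eq_iff)
  have "fs_smul (-1) (fs_mul (fs_mul (ug_transpose r) t) (ug_transpose l)) \<in> IU"
    by (intro ideal_smul ideal_mod.two_sided two_sided)
  moreover have "coef (ug_transpose (fs_mul (fs_mul l t) r)) = coef (fs_smul (-1) (fs_mul (fs_mul (ug_transpose r) t) (ug_transpose l)))"
  proof -
    have "coef (ug_transpose (fs_mul (fs_mul l t) r)) = coef (fs_mul (ug_transpose r) (ug_transpose (fs_mul l t)))"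
      by (rule tr_mul)
    also have "\<dots> = coef (fs_mul (ug_transpose r) (fs_mul (ug_transpose t) (ug_transpose l)))"
      by (rule fs_mul_cong2[OF tr_mul])
    also have "\<dots> = coef (fs_mul (fs_mul (ug_transpose r) (ug_transpose t)) (ug_transpose l))"
      by (simp add: fs_mul_assoc)
    also have "\<dots> = coef (fs_mul (fs_mul (ug_transpose r) (fs_smul (-1) t)) (ug_transpose l))"
      by (rule fs_mul_cong1[OF fs_mul_cong2[OF tt]])
    also have "\<dots> = coef (fs_mul (fs_smul (-1) (fs_mul (ug_transpose r) t)) (ug_transpose l))"
      by (rule fs_mul_cong1[OF fs_mul_smul2])
    also have "\<dots> = coef (fs_smul (-1) (fs_mul (fs_mul (ug_transpose r) t) (ug_transpose l)))"
      by (simp add: fs_mul_smul1)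
    finally show ?thesis .
  qed
  ultimately show ?case by (rule ideal_coef)
next
  case (left x l)
  then show ?case by simp
qed

section \<open>The operator f(0)\<close>

definition Urel' :: "sl2b \<Rightarrow> sl2b \<Rightarrow> sl2b fsum" where
  "Urel' a b = [(1,[a,b])] @ [(-1,[b,a])] @ fs_smul (-1) (gsum (\<lambda>z. [(brv a b z,[z])]))"

lemma Urel'_coef: "coef (Urel a b) = coef (Urel' a b)"
  by (simp add: Urel_def Urel'_def fs_diff_def fs_add_def fun_eq_iff fs_lin_gsum[unfolded fun_eq_iff])

lemma Urel'_in: "fs_mul (Urel' a b) X \<in> IU"
proof -
  have "fs_mul (fs_mul [(1,[])] (Urel a b)) X \<in> IU" by (intro ideal_mod.two_sided Urel_in)
  moreover have "coef (fs_mul (Urel' a b) X) = coef (fs_mul (fs_mul [(1,[])] (Urel a b)) X)"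
    by (rule fs_mul_cong1) (simp add: fs_mul_one1 Urel'_coef)
  ultimately show ?thesis by (rule ideal_coef)
qed

lemma lam_Cons[simp]: "lam ((c,w)#p) = (c * sgnw w, map fst w) # lam p" by (simp add: lam_def)

definition adr :: "sl2b \<Rightarrow> sl2b fsum \<Rightarrow> sl2b fsum" where
  "adr a L = fs_mul [(1,[a])] L @ fs_smul (-1) (fs_mul L [(1,[a])])"

lemma lam_Dw0: "cong_mod Ug_rels {} (lam (Dw k a 0 w)) (adr a (lam [(1,w)]))"
proof (induction w)
  case Nil
  show ?case by (rule cm_coef) (simp add: adr_def lam_single fun_eq_iff sgnw_def)
next
  case (Cons x w)
  obtain b i where x: "x = (b,i)" by force
  define X where "X = lam (Dw k a 0 w)"
  define s' where "s' = sgnw w"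
  define t :: complex where "t = (-1)^(Suc i)"
  define w0 where "w0 = map fst w"
  have L': "lam [(1,w)] = [(s', w0)]" by (simp add: lam_single s'_def w0_def)
  have E2: "fs_mul [(1,[b])] (fs_diff X (adr a [(s', w0)])) \<in> IU"
    using Cons unfolding L' X_def cong_mod_def by (rule ideal_left)
  have E1: "fs_mul (Urel' a b) [(s', w0)] \<in> IU" by (rule Urel'_in)
  have D: "Dw k a 0 ((b,i)#w) = gsum (\<lambda>z. [(brv a b z, (z, i) # w)]) @ rmul [(b,i)] (Dw k a 0 w)"
    by simp
  have lr: "coef (lam (rmul [(b,i)] (Dw k a 0 w))) = coef (fs_smul t (rmul [b] X))"
    using lam_rmul[of "[(b,i)]" "Dw k a 0 w"] by (simp add: X_def t_def sgnw_def)
  have sg: "\<And>z. sgnw ((z,i)#w) = t * s'" by (simp add: sgnw_Cons t_def s'_def)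
  have "coef (fs_diff (lam (Dw k a 0 (x#w))) (adr a (lam [(1, x#w)]))) =
        coef (fs_smul t (fs_mul [(1,[b])] (fs_diff X (adr a [(s', w0)]))) @ fs_smul (-t) (fs_mul (Urel' a b) [(s', w0)]))"
    unfolding x D using lr
    by (simp add: lam_def[of "gsum _"] gsum_def sg lam_single adr_def Urel'_def fs_diff_def fs_add_def
          fs_mul_smul1 w0_def s'_def fun_eq_iff algebra_simps)
  moreover have "fs_smul t (fs_mul [(1,[b])] (fs_diff X (adr a [(s', w0)]))) @ fs_smul (-t) (fs_mul (Urel' a b) [(s', w0)]) \<in> IU"
    by (intro ideal_app ideal_smul E1 E2)
  ultimately show ?case unfolding cong_mod_def by (rule ideal_coef[rotated])
qed


abbreviation IUf where "IUf \<equiv> ideal_mod Ug_rels {fs_gen sF}"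

lemma cm_mono: "cong_mod T {} p q \<Longrightarrow> cong_mod T L p q"
  unfolding cong_mod_def by (erule ideal_mono) auto

lemma lin_adr: "lin (\<lambda>V. adr a (lam V))"
  unfolding adr_def
  by (rule lin_append[OF lin_comp[OF lin_fs_mul lin_lam] lin_smul[OF lin_comp[OF lin_fs_mul_r lin_lam]]])

lemma lam_Dp0: "cong_mod Ug_rels {} (lam (Dp k a 0 V)) (adr a (lam V))"
proof -
  have X: "coef (lam (Dp k a 0 V)) = coef (lift (\<lambda>w. lam (Dw k a 0 w)) V)"
    unfolding Dp_def by (rule lin_lift_apply[OF lin_lam])
  have Y: "cong_mod Ug_rels {} (lift (\<lambda>w. lam (Dw k a 0 w)) V) (lift (\<lambda>w. adr a (lam [(1,w)])) V)"
    by (rule cm_lift) (rule lam_Dw0)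
  have Z: "coef (adr a (lam V)) = coef (lift (\<lambda>w. adr a (lam [(1,w)])) V)"
    by (rule linD[OF lin_adr])
  show ?thesis by (rule cm_coef_trans[OF X Z Y])
qed

definition embw :: "(sl2b \<times> nat) list \<Rightarrow> aff list" where
  "embw w = map (\<lambda>(a,i). Mode a (- int i)) w"

lemma emb_lift: "emb g = lift (\<lambda>w. [(1, embw w)]) g"
  by (induction g) (auto simp: emb_def embw_def)

lemma rho_emb: "rho k (emb g) v = lift (\<lambda>w. actw k (embw w) v) g"
  by (induction g) (auto simp: emb_def embw_def rho_def)

lemma fs_mul_single_left: "coef (fs_mul [(1,[a])] [(s,w)]) = coef [(s, a#w)]"
  by (simp add: fun_eq_iff)

lemma word_nm:
  "(\<forall>x\<in>set w. nminus_gen x) \<Longrightarrow>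
   cong_mod Ug_rels {fs_gen sF} (lam (actw k (embw w) [(1,[])])) [((-1)^(ndeg w), map fst w)]"
proof (induction w)
  case Nil
  show ?case by (rule cm_coef) (simp add: embw_def ndeg_def lam_single sgnw_def fun_eq_iff)
next
  case (Cons x w)
  obtain a i where x: "x = (a,i)" by force
  define V where "V = actw k (embw w) [(1,[])]"
  define s :: complex where "s = (-1)^(ndeg w)"
  have IH: "cong_mod Ug_rels {fs_gen sF} (lam V) [(s, map fst w)]"
    using Cons unfolding V_def s_def by simp
  have act: "actw k (embw (x#w)) [(1,[])] = opz k a (- int i) V"
    by (simp add: embw_def x V_def)
  have nd: "ndeg ((a,i)#w) = i + ndeg w" by (simp add: ndeg_def)
  show ?case
  proof (cases "i = 0")
    case False
    have o: "opz k a (- int i) V = rmul [(a, i - 1)] V"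
    proof -
      have "nat (- (- int i) - 1) = i - 1" using False by simp
      then show ?thesis using False by (simp add: opz_def)
    qed
    have sg: "sgnw [(a, i - Suc 0)] = (-1)^i" using False by (simp add: sgnw_def)
    have X: "coef (lam (rmul [(a, i - 1)] V)) = coef (fs_smul ((-1)^i) (fs_mul [(1,[a])] (lam V)))"
      using lam_rmul[of "[(a,i-1)]" V] rmul_fs_mul1[of "[a]" "lam V"] by (simp add: sg fun_eq_iff del: fs_mul_Cons)
    have Y: "cong_mod Ug_rels {fs_gen sF} (fs_smul ((-1)^i) (fs_mul [(1,[a])] (lam V)))
        (fs_smul ((-1)^i) (fs_mul [(1,[a])] [(s, map fst w)]))"
      by (intro cm_smul cm_left IH)
    have Z: "coef [((-1)^(ndeg (x#w)), map fst (x#w))] = coef (fs_smul ((-1)^i) (fs_mul [(1,[a])] [(s, map fst w)]))"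
      by (simp add: nd s_def x power_add fun_eq_iff algebra_simps)
    show ?thesis unfolding act o by (rule cm_coef_trans[OF X Z Y])
  next
    case True
    then have a: "a = sF" using Cons.prems by (simp add: x nminus_gen_def)
    have o: "opz k a (- int i) V = Dp k sF 0 V" using True by (simp add: opz_def a)
    have c1: "cong_mod Ug_rels {fs_gen sF} (lam (Dp k sF 0 V)) (adr sF (lam V))"
      by (rule cm_mono) (rule lam_Dp0)
    have c2: "cong_mod Ug_rels {fs_gen sF} (adr sF (lam V)) (fs_mul [(1,[sF])] (lam V))"
    proof -
      have "fs_mul (lam V) (fs_gen sF) \<in> IUf" by (rule ideal_L) simp
      then have "fs_smul (-1) (fs_mul (lam V) (fs_gen sF)) \<in> IUf" by (rule ideal_smul)
      then show ?thesis unfolding cong_mod_def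
        by (rule ideal_coef) (simp add: adr_def fs_gen_def fs_diff_def fs_add_def fun_eq_iff)
    qed
    have c3: "cong_mod Ug_rels {fs_gen sF} (fs_mul [(1,[sF])] (lam V)) (fs_mul [(1,[sF])] [(s, map fst w)])"
      by (rule cm_left[OF IH])
    have c4: "coef (fs_mul [(1,[sF])] [(s, map fst w)]) = coef [((-1)^(ndeg (x#w)), map fst (x#w))]"
      by (simp add: s_def x a True fun_eq_iff ndeg_def)
    show ?thesis unfolding act o
      by (rule cm_trans[OF cm_trans[OF cm_trans[OF c1 c2] c3] cm_coef[OF c4]])
  qed
qed


lemma lam_emb:
  assumes "\<forall>(c, w)\<in>set g. \<forall>x\<in>set w. nminus_gen x" "\<forall>(c, w)\<in>set g. ndeg w = n"
  shows "cong_mod Ug_rels {fs_gen sF} (lam (rho k (emb g) [(1,[])])) (fs_smul ((-1)^n) (eps g))"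
proof -
  have X: "coef (lam (rho k (emb g) [(1,[])])) = coef (lift (\<lambda>w. lam (actw k (embw w) [(1,[])])) g)"
    unfolding rho_emb by (rule lin_lift_apply[OF lin_lam])
  have Y: "cong_mod Ug_rels {fs_gen sF} (lift (\<lambda>w. lam (actw k (embw w) [(1,[])])) g)
              (lift (\<lambda>w. [((-1)^(ndeg w), map fst w)]) g)"
  proof (rule cm_lift)
    fix c w assume "(c,w) \<in> set g"
    then have "\<forall>x\<in>set w. nminus_gen x" using assms(1) by auto
    then show "cong_mod Ug_rels {fs_gen sF} (lam (actw k (embw w) [(1,[])])) [((-1)^(ndeg w), map fst w)]"
      by (rule word_nm)
  qed
  have Z1: "coef (lift (\<lambda>w. [((-1)^(ndeg w), map fst w)]) g) = coef (lift (\<lambda>w. [((-1::complex)^n, map fst w)]) g)"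
    by (rule lift_cong_f) (use assms(2) in auto)
  have Z2: "coef (lift (\<lambda>w. [((-1::complex)^n, map fst w)]) g) = coef (fs_smul ((-1)^n) (eps g))"
    by (induction g) (auto simp: eps_def fun_eq_iff algebra_simps)
  show ?thesis by (rule cm_coef_trans[OF X _ Y]) (simp add: Z1 Z2)
qed

definition conv :: "aff \<Rightarrow> vl" where "conv x = (aff_base x, nat (- aff_mode x - 1))"

lemma actw_neg: "neg_word w \<Longrightarrow> actw k w [(1,[])] = [(1, map conv w)]"
proof (induction w)
  case Nil then show ?case by simp
next
  case (Cons x w)
  then obtain a m where x: "x = Mode a m" "m \<le> -1" and nw: "neg_word w" by (auto simp: neg_word_def)
  show ?case using Cons.IH[OF nw] x by (simp add: opz_def conv_def)
qed

lemma lam_neg: "(\<forall>(c, w)\<in>set p. neg_word w) \<Longrightarrow> coef (lam (rho k p [(1,[])])) = coef (ug_transpose (F_mono p))"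
proof (induction p)
  case Nil then show ?case by (simp add: rho_def F_mono_def)
next
  case (Cons x p)
  obtain c w where x: "x = (c,w)" by force
  have nw: "neg_word w" using Cons.prems x by auto
  have IH: "coef (lam (rho k p [(1,[])])) = coef (ug_transpose (F_mono p))" using Cons by auto
  have s: "sgnw (map conv w) = (-1) ^ length w * (-1) ^ (\<Sum>x\<leftarrow>w. nat (- aff_mode x - 1))"
    by (simp add: sgnw_def conv_def power_add o_def)
  have f: "fst \<circ> conv = aff_base" by (rule ext) (simp add: conv_def)
  show ?case using IH
    by (simp add: x rho_def actw_neg[OF nw] F_mono_def lam_def s f fun_eq_iff algebra_simps)
qed

definition embv :: "vl list \<Rightarrow> aff list" where "embv w = map (\<lambda>(b,i). Mode b (- int i - 1)) w"
definition embV :: "vl fsum \<Rightarrow> aff fsum" where "embV p = map (\<lambda>(c,w). (c, embv w)) p"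

lemma embV_append[simp]: "embV (p @ q) = embV p @ embV q" by (simp add: embV_def)
lemma embV_Nil[simp]: "embV [] = []" by (simp add: embV_def)
lemma embV_Cons[simp]: "embV ((c,w)#p) = (c, embv w) # embV p" by (simp add: embV_def)
lemma embV_smul[simp]: "embV (fs_smul a p) = fs_smul a (embV p)" by (induction p) auto
lemma embV_lift: "embV (lift f p) = lift (\<lambda>w. embV (f w)) p" by (induction p) auto
lemma embV_gsum[simp]: "embV (gsum F) = gsum (\<lambda>z. embV (F z))" by (simp add: gsum_def)
lemma embV_rmul: "embV (rmul [(b,i)] p) = rmul [Mode b (- int i - 1)] (embV p)"
  by (induction p) (auto simp: embv_def)
lemma embv_Cons[simp]: "embv ((b,i)#w) = Mode b (- int i - 1) # embv w" by (simp add: embv_def)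
lemma embv_Nil[simp]: "embv [] = []" by (simp add: embv_def)
lemma embV_coef: "coef (embV p) = coef (lift (\<lambda>w. [(1, embv w)]) p)"
  by (induction p) (auto simp: fun_eq_iff)

abbreviation IM where "IM k \<equiv> ideal_mod ghat_rels (M_left k)"

lemma ghat_rel_in: "fs_diff (fs_diff (fs_diff [(1,[Mode a m, Mode b l])] [(1,[Mode b l, Mode a m])])
          (map (\<lambda>(c, x). (c, [Mode x (m + l)])) (sl2_bracket a b)))
        [((if m + l = 0 then of_int m * sl2_form a b else 0), [Cen])] \<in> ghat_rels"
  unfolding ghat_rels_def by blast

lemma IM_T: "t \<in> ghat_rels \<Longrightarrow> fs_mul t X \<in> IM k"
proof -
  assume "t \<in> ghat_rels"
  then have "fs_mul (fs_mul [(1,[])] t) X \<in> IM k" by (rule ideal_mod.two_sided)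
  then show ?thesis by (rule ideal_coef) (rule fs_mul_cong1[OF fs_mul_one1[symmetric]])
qed

lemma F0w: "cong_mod ghat_rels (M_left k) (fs_mul [(1,[Mode a 0])] [(1, embv w)]) (embV (Dw k a 0 w))"
proof (induction w)
  case Nil
  have "fs_mul [(1,[])] (fs_gen (Mode a 0)) \<in> IM k" by (rule ideal_L) (auto simp: M_left_def)
  then show ?case unfolding cong_mod_def
    by (rule ideal_coef) (simp add: fs_gen_def fun_eq_iff)
next
  case (Cons x w)
  obtain b i where x: "x = (b,i)" by force
  define l where "l = - int i - 1"
  define W where "W = embv w"
  have l0: "(0::int) + l \<noteq> 0" "l \<noteq> 0" by (auto simp: l_def)
  have T1: "fs_mul (fs_diff (fs_diff (fs_diff [(1,[Mode a 0, Mode b l])] [(1,[Mode b l, Mode a 0])])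
          (map (\<lambda>(c, x). (c, [Mode x (0 + l)])) (sl2_bracket a b)))
        [((if 0 + l = 0 then of_int 0 * sl2_form a b else 0), [Cen])]) [(1,W)] \<in> IM k"
    by (rule IM_T[OF ghat_rel_in])
  have T2: "fs_mul [(1,[Mode b l])] (fs_diff (fs_mul [(1,[Mode a 0])] [(1, W)]) (embV (Dw k a 0 w))) \<in> IM k"
    using Cons unfolding cong_mod_def W_def by (rule ideal_left)
  have BR: "coef (fs_mul (map (\<lambda>(c, x). (c, [Mode x l])) (sl2_bracket a b)) [(1,W)]) = coef (gsum (\<lambda>z. [(brv a b z, Mode z l # W)]))"
  proof -
    have "coef (fs_mul (map (\<lambda>(c, x). (c, [Mode x l])) (sl2_bracket a b)) [(1,W)]) =
          coef (fs_mul (gsum (\<lambda>z. [(brv a b z, [Mode z l])])) [(1,W)])"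
      by (rule fs_mul_cong1[OF bracket_gsum])
    then show ?thesis by (simp add: gsum_def fun_eq_iff)
  qed
  have D: "embV (Dw k a 0 ((b,i)#w)) = gsum (\<lambda>z. [(brv a b z, Mode z l # W)]) @ rmul [Mode b l] (embV (Dw k a 0 w))"
    by (simp add: embV_rmul l_def W_def)
  have "coef (fs_diff (fs_mul [(1,[Mode a 0])] [(1, embv (x#w))]) (embV (Dw k a 0 (x#w)))) =
     coef (fs_mul (fs_diff (fs_diff (fs_diff [(1,[Mode a 0, Mode b l])] [(1,[Mode b l, Mode a 0])])
          (map (\<lambda>(c, x). (c, [Mode x (0 + l)])) (sl2_bracket a b)))
        [((if 0 + l = 0 then of_int 0 * sl2_form a b else 0), [Cen])]) [(1,W)]
      @ fs_mul [(1,[Mode b l])] (fs_diff (fs_mul [(1,[Mode a 0])] [(1, W)]) (embV (Dw k a 0 w))))"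
    unfolding x D
    using BR
    by (simp add: l0 fs_diff_def fs_add_def fs_mul_smul1 W_def[symmetric] l_def[symmetric] fun_eq_iff rmul_smul)
  moreover have "fs_mul (fs_diff (fs_diff (fs_diff [(1,[Mode a 0, Mode b l])] [(1,[Mode b l, Mode a 0])])
          (map (\<lambda>(c, x). (c, [Mode x (0 + l)])) (sl2_bracket a b)))
        [((if 0 + l = 0 then of_int 0 * sl2_form a b else 0), [Cen])]) [(1,W)]
      @ fs_mul [(1,[Mode b l])] (fs_diff (fs_mul [(1,[Mode a 0])] [(1, W)]) (embV (Dw k a 0 w))) \<in> IM k"
    by (rule ideal_app[OF T1 T2])
  ultimately show ?case unfolding cong_mod_def by (rule ideal_coef[rotated])
qed


lemma F0: "cong_mod ghat_rels (M_left k) (fs_mul [(1,[Mode a 0])] (embV V)) (embV (Dp k a 0 V))"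
proof -
  have X: "coef (fs_mul [(1,[Mode a 0])] (embV V)) = coef (lift (\<lambda>w. fs_mul [(1,[Mode a 0])] [(1, embv w)]) V)"
  proof -
    have "coef (fs_mul [(1,[Mode a 0])] (embV V)) = coef (fs_mul [(1,[Mode a 0])] (lift (\<lambda>w. [(1, embv w)]) V))"
      by (rule fs_mul_cong2[OF embV_coef])
    also have "\<dots> = coef (lift (\<lambda>w. fs_mul [(1,[Mode a 0])] [(1, embv w)]) V)"
      by (rule lin_lift_apply[OF lin_fs_mul])
    finally show ?thesis .
  qed
  have Z: "embV (Dp k a 0 V) = lift (\<lambda>w. embV (Dw k a 0 w)) V"
    by (simp add: Dp_def embV_lift)
  have Y: "cong_mod ghat_rels (M_left k) (lift (\<lambda>w. fs_mul [(1,[Mode a 0])] [(1, embv w)]) V) (lift (\<lambda>w. embV (Dw k a 0 w)) V)"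
    by (rule cm_lift) (rule F0w)
  show ?thesis unfolding Z by (rule cm_coef_trans[OF X refl Y])
qed

lemma word_M:
  "(\<forall>x\<in>set w. nminus_gen x) \<Longrightarrow>
   cong_mod ghat_rels (M_left k) [(1, embw w)] (embV (actw k (embw w) [(1,[])]))"
proof (induction w)
  case Nil
  show ?case by (simp add: embw_def cm_refl)
next
  case (Cons x w)
  obtain a i where x: "x = (a,i)" by force
  define V where "V = actw k (embw w) [(1,[])]"
  have IH: "cong_mod ghat_rels (M_left k) [(1, embw w)] (embV V)"
    using Cons unfolding V_def by simp
  have act: "actw k (embw (x#w)) [(1,[])] = opz k a (- int i) V"
    by (simp add: embw_def x V_def)
  have e1: "coef [(1, embw (x#w))] = coef (fs_mul [(1,[Mode a (- int i)])] [(1, embw w)])"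
    by (simp add: embw_def x fun_eq_iff)
  have c1: "cong_mod ghat_rels (M_left k) (fs_mul [(1,[Mode a (- int i)])] [(1, embw w)]) (fs_mul [(1,[Mode a (- int i)])] (embV V))"
    by (rule cm_left[OF IH])
  have c2: "cong_mod ghat_rels (M_left k) (fs_mul [(1,[Mode a (- int i)])] (embV V)) (embV (opz k a (- int i) V))"
  proof (cases "i = 0")
    case False
    have o: "opz k a (- int i) V = rmul [(a, i - 1)] V"
    proof -
      have "nat (- (- int i) - 1) = i - 1" using False by simp
      then show ?thesis using False by (simp add: opz_def)
    qed
    have m: "- int (i - 1) - 1 = - int i" using False by simp
    show ?thesis unfolding o embV_rmul m
      by (rule cm_coef) (rule rmul_fs_mul1[symmetric])
  next
    case True
    then have a: "a = sF" using Cons.prems by (simp add: x nminus_gen_def)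
    have o: "opz k a (- int i) V = Dp k sF 0 V" using True by (simp add: opz_def a)
    show ?thesis unfolding o using F0[of k sF V] by (simp add: a True)
  qed
  show ?case unfolding act
    by (rule cm_trans[OF cm_coef[OF e1] cm_trans[OF c1 c2]])
qed

lemma emb_M:
  assumes "\<forall>(c, w)\<in>set g. \<forall>x\<in>set w. nminus_gen x"
  shows "M_eq k (emb g) (embV (rho k (emb g) [(1,[])]))"
proof -
  have "cong_mod ghat_rels (M_left k) (lift (\<lambda>w. [(1, embw w)]) g) (lift (\<lambda>w. embV (actw k (embw w) [(1,[])])) g)"
  proof (rule cm_lift)
    fix c w assume "(c,w) \<in> set g"
    then have "\<forall>x\<in>set w. nminus_gen x" using assms by auto
    then show "cong_mod ghat_rels (M_left k) [(1, embw w)] (embV (actw k (embw w) [(1,[])]))"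
      by (rule word_M)
  qed
  moreover have e: "embV (rho k (emb g) [(1,[])]) = lift (\<lambda>w. embV (actw k (embw w) [(1,[])])) g"
    by (simp only: rho_emb embV_lift)
  ultimately show ?thesis unfolding M_eq_def e by (simp only: emb_lift[of g])
qed

lemma embV_neg: "\<forall>(c, w)\<in>set (embV p). neg_word w"
  by (auto simp: embV_def embv_def neg_word_def)

theorem lemma3p2:
  fixes k :: complex and g :: "(sl2b \<times> nat) fsum" and n :: nat
  assumes "k \<noteq> -2"
    and "\<forall>(c, w)\<in>set g. \<forall>x\<in>set w. nminus_gen x"
    and "\<forall>(c, w)\<in>set g. ndeg w = n"
  shows "(\<exists>u. F_of_class k (emb g) u) \<and>
         (\<forall>u. F_of_class k (emb g) u \<longrightarrow>
              Ug_cong_nminus (eps g) (fs_smul ((-1) ^ n) (ug_transpose u)))"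
proof
  show "\<exists>u. F_of_class k (emb g) u"
    unfolding F_of_class_def Ug_eq_def
    using emb_M[OF assms(2), of k] embV_neg cm_refl by blast
next
  show "\<forall>u. F_of_class k (emb g) u \<longrightarrow> Ug_cong_nminus (eps g) (fs_smul ((-1) ^ n) (ug_transpose u))"
  proof (intro allI impI)
    fix u assume "F_of_class k (emb g) u"
    then obtain p where neg: "\<forall>(c, w)\<in>set p. neg_word w" and Me: "M_eq k (emb g) p"
      and Ue: "Ug_eq u (F_mono p)" unfolding F_of_class_def by blast
    define Lg where "Lg = lam (rho k (emb g) [(1,[])])"
    define Lp where "Lp = lam (rho k p [(1,[])])"
    have A: "cong_mod Ug_rels {fs_gen sF} Lg Lp"
    proof -
      have "rho k (fs_diff (emb g) p) [(1,[])] \<in> IV"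
        using Me unfolding M_eq_def cong_mod_def by (rule rho_M)
      then have "lam (rho k (fs_diff (emb g) p) [(1,[])]) \<in> IU" by (rule lam_IV)
      then have "lam (rho k (fs_diff (emb g) p) [(1,[])]) \<in> IUf" by (rule ideal_mono) auto
      moreover have "coef (fs_diff Lg Lp) = coef (lam (rho k (fs_diff (emb g) p) [(1,[])]))"
      proof -
        have "coef (lam (rho k (fs_diff (emb g) p) [(1,[])])) =
              coef (lam (rho k (emb g) [(1,[])] @ fs_smul (-1) (rho k p [(1,[])])))"
          by (rule lin_cong[OF lin_lam rho_fs_diff])
        then show ?thesis by (simp add: Lg_def Lp_def fs_diff_def fs_add_def fun_eq_iff)
      qed
      ultimately show ?thesis unfolding cong_mod_def by (rule ideal_coef)
    qed
    have B: "cong_mod Ug_rels {fs_gen sF} Lg (fs_smul ((-1)^n) (eps g))"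
      unfolding Lg_def by (rule lam_emb[OF assms(2,3)])
    have C: "coef Lp = coef (ug_transpose (F_mono p))"
      unfolding Lp_def by (rule lam_neg[OF neg])
    have D: "cong_mod Ug_rels {fs_gen sF} (ug_transpose (F_mono p)) (ug_transpose u)"
    proof -
      have "ug_transpose (fs_diff u (F_mono p)) \<in> IU"
        using Ue unfolding Ug_eq_def cong_mod_def by (rule tr_IU)
      then have "fs_smul (-1) (ug_transpose (fs_diff u (F_mono p))) \<in> IUf"
        by (intro ideal_smul) (erule ideal_mono, auto)
      then show ?thesis unfolding cong_mod_def
        by (rule ideal_coef) (simp add: fs_diff_def fs_add_def fun_eq_iff algebra_simps)
    qed
    have s: "(-1::complex)^n * (-1)^n = 1" by (simp add: power_mult_distrib[symmetric])
    have B': "cong_mod Ug_rels {fs_gen sF} (eps g) (fs_smul ((-1)^n) Lg)"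
    proof -
      have "cong_mod Ug_rels {fs_gen sF} (fs_smul ((-1)^n) Lg) (fs_smul ((-1)^n) (fs_smul ((-1)^n) (eps g)))"
        by (rule cm_smul[OF B])
      moreover have sx: "coef (eps g) = coef (fs_smul ((-1)^n) (fs_smul ((-1)^n) (eps g)))"
        by (simp add: s fun_eq_iff)
      ultimately have "cong_mod Ug_rels {fs_gen sF} (fs_smul ((-1)^n) Lg) (eps g)"
        by (intro cm_coef_trans[OF refl sx])
      then show ?thesis by (rule cm_sym)
    qed
    have "cong_mod Ug_rels {fs_gen sF} (fs_smul ((-1)^n) Lg) (fs_smul ((-1)^n) (ug_transpose u))"
      by (rule cm_smul) (rule cm_trans[OF cm_trans[OF A cm_coef[OF C]] D])
    then show "Ug_cong_nminus (eps g) (fs_smul ((-1) ^ n) (ug_transpose u))"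
      unfolding Ug_cong_nminus_def by (rule cm_trans[OF B'])
  qed
qed


end
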